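(* Let $N\ge 1$ be an integer, $\mathbb{X}=L^2(\mathbb{R}^N)$ with norm $\|\cdot\|$, $\tau>0$, and $\mathcal{C}=C([-\tau,0],\mathbb{X})$ with norm $\|\phi\|_{\mathcal{C}}=\sup_{\theta\in[-\tau,0]}\|\phi(\theta)\|$. Let $\mu,\sigma,\iota>0$, $g\in\mathbb{X}$, and let $f:\mathbb{X}\to\mathbb{X}$ be bounded, i.e. there is a constant $\bar N>0$ with $\|f(\psi)\|\le \bar N$ for all $\psi$. Let $S(t)$ be the semigroup on $\mathbb{X}$ given by $S(0)\phi=\phi$ and $$S(t)[\phi](x)=\frac{e^{-\mu t}}{(4\pi t)^{N/2}}\int_{\mathbb{R}^N}\phi(y)e^{-\frac{|x-y|^2}{4t}}\,dy,\quad t>0,$$ (the semigroup generated by $\Delta-\mu I$), and let $H:\mathbb{X}\to\mathbb{X}$ be $H(\phi)(x)=\int_{\mathbb{R}^N}\Gamma_\iota(x-y)\phi(y)\,dy$ with $\Gamma_\iota(x)=(4\pi\iota)^{-N/2}e^{-|x|^2/(4\iota)}$. For $\phi\in\mathcal{C}$ let $u=u^\phi$ be the (unique, globally defined) solution of the integral equation $$u(t)=S(t)\phi(0)+\sigma\int_0^t S(t-s)u(s-\tau)\,ds+\int_0^t S(t-s)\big[H(f(u(s-\tau)))+g\big]\,ds,\ t>0,\qquad u_0=\phi,$$ (the mild form of $\partial_t u=\Delta u-\mu u+\sigma u(t-\tau)+\int_{\mathbb{R}^N}\Gamma_\iota(x-y)f(u(y,t-\tau))\,dy+g(x)$), and define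 $\Phi(t):\mathcal{C}\to\mathcal{C}$ by $\Phi(t)\phi=u^\phi_t$, where $u_t(\theta)=u(t+\theta)$, $\theta\in[-\tau,0]$. Assume $\sigma e^{\mu\tau}-\mu<0$. Then, with $M=\bar N+\|g\|$, the set $$\mathcal{B}=\left\{\phi\in\mathcal{C}:\ \|\phi\|_{\mathcal{C}}\le 2\left(\frac{M}{\mu}+\frac{M\sigma e^{\mu\tau}}{\mu(\mu-\sigma e^{\mu\tau})}\right)\right\}$$ is an absorbing set for $\Phi$: for every bounded set $\mathcal{D}\subset\mathcal{C}$ there exists $T_{\mathcal{D}}>0$ such that $\Phi(t)\mathcal{D}\subset\mathcal{B}$ for all $t\ge T_{\mathcal{D}}$.
   Context: An absorbing set for the dynamical system $\{\Phi(t)\}_{t\ge0}$ on $\mathcal{C}$ is a set $\mathcal{B}\subset\mathcal{C}$ such that for every bounded $\mathcal{D}\subset\mathcal{C}$ there is $T_{\mathcal{D}}>0$ with $\Phi(t)\mathcal{D}\subset\mathcal{B}$ for all $t\ge T_{\mathcal{D}}$. *)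

theory Defs
  imports "HOL-Analysis.Analysis"
begin

text \<open>Elements of X = L^2(R^N) are represented by functions of type real^'n => real
  (N = CARD('n)); two representatives denote the same element of X iff they agree a.e.\<close>

definition L2 :: "(real^'n \<Rightarrow> real) \<Rightarrow> bool" where
  "L2 f \<longleftrightarrow> f \<in> borel_measurable lborel \<and> integrable lborel (\<lambda>x. (f x)\<^sup>2)"

definition L2norm :: "(real^'n \<Rightarrow> real) \<Rightarrow> real" where
  "L2norm f = sqrt (\<integral>x. (f x)\<^sup>2 \<partial>lborel)"

definition heat_sg :: "real \<Rightarrow> real \<Rightarrow> (real^'n \<Rightarrow> real) \<Rightarrow> (real^'n \<Rightarrow> real)" where
  "heat_sg \<mu> t \<phi> x =
     (if t = 0 then \<phi> x
      else exp (- \<mu> * t) / (4 * pi * t) powr (real CARD('n) / 2) *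
           (\<integral>y. \<phi> y * exp (- (norm (x - y))\<^sup>2 / (4 * t)) \<partial>lborel))"

definition gauss_kernel :: "real \<Rightarrow> real^'n \<Rightarrow> real" where
  "gauss_kernel \<iota> x = (4 * pi * \<iota>) powr (- real CARD('n) / 2) * exp (- (norm x)\<^sup>2 / (4 * \<iota>))"

definition Hop :: "real \<Rightarrow> (real^'n \<Rightarrow> real) \<Rightarrow> (real^'n \<Rightarrow> real)" where
  "Hop \<iota> \<phi> x = (\<integral>y. gauss_kernel \<iota> (x - y) * \<phi> y \<partial>lborel)"

definition L2_continuous_on :: "real set \<Rightarrow> (real \<Rightarrow> real^'n \<Rightarrow> real) \<Rightarrow> bool" where
  "L2_continuous_on S w \<longleftrightarrow>
     (\<forall>t\<in>S. \<forall>\<epsilon>>0. \<exists>\<delta>>0. \<forall>s\<in>S. \<bar>s - t\<bar> < \<delta> \<longrightarrow> L2norm (w s - w t) < \<epsilon>)"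

text \<open>The phase space C = C([-tau,0], X) (values outside [-tau,0] are irrelevant).\<close>
definition Cspace :: "real \<Rightarrow> (real \<Rightarrow> real^'n \<Rightarrow> real) set" where
  "Cspace \<tau> = {\<phi>. (\<forall>\<theta>\<in>{-\<tau>..0}. L2 (\<phi> \<theta>)) \<and> L2_continuous_on {-\<tau>..0} \<phi>}"

definition Cnorm :: "real \<Rightarrow> (real \<Rightarrow> real^'n \<Rightarrow> real) \<Rightarrow> real" where
  "Cnorm \<tau> \<phi> = (SUP \<theta>\<in>{-\<tau>..0}. L2norm (\<phi> \<theta>))"

definition mild_solution ::
  "real \<Rightarrow> real \<Rightarrow> real \<Rightarrow> real \<Rightarrow> ((real^'n \<Rightarrow> real) \<Rightarrow> (real^'n \<Rightarrow> real)) \<Rightarrow> (real^'n \<Rightarrow> real)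
   \<Rightarrow> (real \<Rightarrow> real^'n \<Rightarrow> real) \<Rightarrow> (real \<Rightarrow> real^'n \<Rightarrow> real) \<Rightarrow> bool" where
  "mild_solution \<tau> \<mu> \<sigma> \<iota> f g \<phi> u \<longleftrightarrow>
     (\<forall>t\<in>{-\<tau>..}. L2 (u t)) \<and>
     L2_continuous_on {-\<tau>..} u \<and>
     (\<lambda>(s, x). u s x) \<in> borel_measurable (lborel \<Otimes>\<^sub>M lborel) \<and>
     (\<lambda>(s, x). f (u s) x) \<in> borel_measurable (lborel \<Otimes>\<^sub>M lborel) \<and>
     (\<forall>\<theta>\<in>{-\<tau>..0}. AE x in lborel. u \<theta> x = \<phi> \<theta> x) \<and>
     (\<forall>t>0. AE x in lborel.
        u t x = heat_sg \<mu> t (\<phi> 0) x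
          + \<sigma> * (LINT s:{0..t}|lborel. heat_sg \<mu> (t - s) (u (s - \<tau>)) x)
          + (LINT s:{0..t}|lborel. heat_sg \<mu> (t - s) (\<lambda>y. Hop \<iota> (f (u (s - \<tau>))) y + g y) x))"

end

theory Submission
  imports Defs "HOL-Probability.Probability"
begin


lemma gauss1:
  assumes c: "c > 0"
  shows "(\<integral>\<^sup>+x. ennreal (exp (-(x\<^sup>2)/(4*c))) \<partial>lborel) = ennreal (sqrt (4*pi*c))"
proof -
  define s where "s = sqrt (2*c)"
  have s2: "s\<^sup>2 = 2*c" using c by (simp add: s_def)
  have eq: "exp (-(x\<^sup>2)/(4*c)) = sqrt (4*pi*c) * normal_density 0 s x" for x
    unfolding normal_density_def s2 using c by (simp add: real_sqrt_mult)
  have "(\<integral>\<^sup>+x. ennreal (normal_density 0 s x) \<partial>lborel) = 1"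
    using integrable_normal_density[of s 0] integral_normal_density[of s 0] c
    unfolding s_def
    by (subst nn_integral_eq_integral) auto
  then show ?thesis
    unfolding eq using c by (simp add: ennreal_mult nn_integral_cmult)
qed

lemma normsq_sum: "(norm (x::'a::euclidean_space))\<^sup>2 = (\<Sum>b\<in>Basis. (x \<bullet> b)\<^sup>2)"
  unfolding power2_norm_eq_inner by (subst euclidean_inner) (simp add: power2_eq_square)

lemma gaussN:
  assumes c: "c > 0"
  shows "(\<integral>\<^sup>+x. ennreal (exp (-(norm x)\<^sup>2/(4*c))) \<partial>(lborel::('a::euclidean_space) measure))
     = ennreal ((4*pi*c) powr (real DIM('a)/2))"
proof -
  have eq: "ennreal (exp (-(norm x)\<^sup>2/(4*c))) = (\<Prod>b\<in>Basis. ennreal (exp (-((x\<bullet>b)\<^sup>2)/(4*c))))" for x::'a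
    unfolding normsq_sum
    by (simp add: prod_ennreal exp_sum[symmetric] sum_negf sum_divide_distrib)
  have "(\<integral>\<^sup>+x. ennreal (exp (-(norm x)\<^sup>2/(4*c))) \<partial>(lborel::'a measure))
     = (\<Prod>b\<in>(Basis::'a set). (\<integral>\<^sup>+x. ennreal (exp (-(x\<^sup>2)/(4*c))) \<partial>lborel))"
    unfolding eq by (rule nn_integral_lborel_prod) auto
  also have "\<dots> = ennreal (sqrt (4*pi*c) ^ DIM('a))"
    using gauss1[OF c] ennreal_power[of "sqrt (4*pi*c)" "DIM('a)"] c by simp
  also have "sqrt (4*pi*c) ^ DIM('a) = (4*pi*c) powr (real DIM('a)/2)"
    using c by (simp add: sqrt_def powr_realpow[symmetric] root_powr_inverse powr_powr)
  finally show ?thesis .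
qed




lemma nn_translate1:
  fixes h :: "'a::euclidean_space \<Rightarrow> ennreal"
  assumes [measurable]: "h \<in> borel_measurable borel"
  shows "(\<integral>\<^sup>+y. h (x - y) \<partial>lborel) = (\<integral>\<^sup>+y. h y \<partial>lborel)"
proof -
  have "(\<integral>\<^sup>+y. h (x - y) \<partial>lborel) =
     (\<integral>\<^sup>+y. h (x - y) \<partial>density (distr lborel borel (\<lambda>z. x + (-1) *\<^sub>R z)) (\<lambda>_. \<bar>-1::real\<bar>^DIM('a)))"
    by (subst lborel_affine[of "-1" x, symmetric]) auto
  also have "\<dots> = (\<integral>\<^sup>+y. h y \<partial>lborel)"
    by (simp add: nn_integral_density nn_integral_distr density_1)
  finally show ?thesis .
qed

lemma nn_translate2:
  fixes h :: "'a::euclidean_space \<Rightarrow> ennreal"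
  assumes [measurable]: "h \<in> borel_measurable borel"
  shows "(\<integral>\<^sup>+x. h (x - y) \<partial>lborel) = (\<integral>\<^sup>+x. h x \<partial>lborel)"
proof -
  have "(\<integral>\<^sup>+x. h (x - y) \<partial>lborel) = (\<integral>\<^sup>+x. h (x - y) \<partial>distr lborel borel ((+) y))"
    by (simp add: lborel_distr_plus)
  also have "\<dots> = (\<integral>\<^sup>+x. h x \<partial>lborel)"
    by (simp add: nn_integral_distr)
  finally show ?thesis .
qed

lemma conv_bound:
  fixes k \<psi> :: "'a::euclidean_space \<Rightarrow> real"
  assumes [measurable]: "k \<in> borel_measurable borel" "\<psi> \<in> borel_measurable borel"
    and knn: "\<And>z. k z \<ge> 0"
    and K: "(\<integral>\<^sup>+z. ennreal (k z) \<partial>lborel) = ennreal K"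
  shows "(\<integral>\<^sup>+x. (\<integral>\<^sup>+y. ennreal (k (x - y) * \<bar>\<psi> y\<bar>) \<partial>lborel)\<^sup>2 \<partial>lborel)
          \<le> ennreal K * ennreal K * (\<integral>\<^sup>+y. ennreal ((\<psi> y)\<^sup>2) \<partial>lborel)"
proof -
  have pw: "(\<integral>\<^sup>+y. ennreal (k (x - y) * \<bar>\<psi> y\<bar>) \<partial>lborel)\<^sup>2
      \<le> ennreal K * (\<integral>\<^sup>+y. ennreal (k (x - y) * (\<psi> y)\<^sup>2) \<partial>lborel)" for x
  proof -
    have e1: "ennreal (k (x - y) * \<bar>\<psi> y\<bar>) = ennreal (sqrt (k (x - y))) * ennreal (sqrt (k (x - y)) * \<bar>\<psi> y\<bar>)" for y
      using knn[of "x - y"] by (simp add: ennreal_mult[symmetric] mult.assoc[symmetric] real_sqrt_mult[symmetric])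
    have e2: "(ennreal (sqrt (k (x - y))))\<^sup>2 = ennreal (k (x - y))" for y
      using knn[of "x - y"] by (simp add: ennreal_power)
    have e3: "(ennreal (sqrt (k (x - y)) * \<bar>\<psi> y\<bar>))\<^sup>2 = ennreal (k (x - y) * (\<psi> y)\<^sup>2)" for y
      using knn[of "x - y"] by (simp add: ennreal_power power_mult_distrib)
    have "(\<integral>\<^sup>+y. ennreal (k (x - y) * \<bar>\<psi> y\<bar>) \<partial>lborel)\<^sup>2
       \<le> (\<integral>\<^sup>+y. (ennreal (sqrt (k (x - y))))\<^sup>2 \<partial>lborel) * (\<integral>\<^sup>+y. (ennreal (sqrt (k (x - y)) * \<bar>\<psi> y\<bar>))\<^sup>2 \<partial>lborel)"
      unfolding e1 by (rule Cauchy_Schwarz_nn_integral) measurable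
    also have "(\<integral>\<^sup>+y. (ennreal (sqrt (k (x - y))))\<^sup>2 \<partial>lborel) = ennreal K"
      unfolding e2 using nn_translate1[of "\<lambda>z. ennreal (k z)" x] K by simp
    finally show ?thesis unfolding e3 .
  qed
  have "(\<integral>\<^sup>+x. (\<integral>\<^sup>+y. ennreal (k (x - y) * \<bar>\<psi> y\<bar>) \<partial>lborel)\<^sup>2 \<partial>lborel)
     \<le> (\<integral>\<^sup>+x. ennreal K * (\<integral>\<^sup>+y. ennreal (k (x - y) * (\<psi> y)\<^sup>2) \<partial>lborel) \<partial>lborel)"
    by (rule nn_integral_mono) (rule pw)
  also have "\<dots> = ennreal K * (\<integral>\<^sup>+x. (\<integral>\<^sup>+y. ennreal (k (x - y) * (\<psi> y)\<^sup>2) \<partial>lborel) \<partial>lborel)"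
    by (rule nn_integral_cmult) measurable
  also have "(\<integral>\<^sup>+x. (\<integral>\<^sup>+y. ennreal (k (x - y) * (\<psi> y)\<^sup>2) \<partial>lborel) \<partial>lborel)
      = (\<integral>\<^sup>+y. (\<integral>\<^sup>+x. ennreal (k (x - y) * (\<psi> y)\<^sup>2) \<partial>lborel) \<partial>lborel)"
    by (rule lborel_pair.Fubini'[symmetric]) measurable
  also have "\<dots> = (\<integral>\<^sup>+y. ennreal K * ennreal ((\<psi> y)\<^sup>2) \<partial>lborel)"
  proof (rule nn_integral_cong)
    fix y
    have "(\<integral>\<^sup>+x. ennreal (k (x - y) * (\<psi> y)\<^sup>2) \<partial>lborel) = (\<integral>\<^sup>+x. ennreal (k (x - y)) * ennreal ((\<psi> y)\<^sup>2) \<partial>lborel)"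
      using knn by (simp add: ennreal_mult)
    also have "\<dots> = (\<integral>\<^sup>+x. ennreal (k (x - y)) \<partial>lborel) * ennreal ((\<psi> y)\<^sup>2)"
      by (rule nn_integral_multc) measurable
    also have "(\<integral>\<^sup>+x. ennreal (k (x - y)) \<partial>lborel) = ennreal K"
      using nn_translate2[of "\<lambda>z. ennreal (k z)" y] K by simp
    finally show "(\<integral>\<^sup>+x. ennreal (k (x - y) * (\<psi> y)\<^sup>2) \<partial>lborel) = ennreal K * ennreal ((\<psi> y)\<^sup>2)" .
  qed
  also have "\<dots> = ennreal K * (\<integral>\<^sup>+y. ennreal ((\<psi> y)\<^sup>2) \<partial>lborel)"
    by (rule nn_integral_cmult) measurable
  finally show ?thesis by (simp add: mult.assoc)
qed



lemma abs_integral_le_nn: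
  fixes f :: "'a \<Rightarrow> real"
  shows "ennreal \<bar>integral\<^sup>L M f\<bar> \<le> (\<integral>\<^sup>+x. ennreal \<bar>f x\<bar> \<partial>M)"
proof (cases "integrable M f")
  case True
  then show ?thesis using integral_norm_bound_ennreal[OF True] by simp
next
  case False
  then show ?thesis by (simp add: not_integrable_integral_eq)
qed

lemma heat_bound:
  fixes \<psi> :: "real^'n \<Rightarrow> real"
  assumes [measurable]: "\<psi> \<in> borel_measurable borel" and t: "t \<ge> 0"
  shows "(\<integral>\<^sup>+x. ennreal ((heat_sg \<mu> t \<psi> x)\<^sup>2) \<partial>lborel)
          \<le> ennreal ((exp (-\<mu>*t))\<^sup>2) * (\<integral>\<^sup>+y. ennreal ((\<psi> y)\<^sup>2) \<partial>lborel)"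
proof (cases "t = 0")
  case True
  then show ?thesis by (simp add: heat_sg_def)
next
  case False
  with t have t: "t > 0" by simp
  have [measurable]: "\<psi> \<in> borel_measurable lborel" by simp
  define c where "c = (4*pi*t) powr (real CARD('n)/2)"
  have c: "c > 0" using t by (simp add: c_def)
  define k :: "real^'n \<Rightarrow> real" where "k z = exp (-(norm z)\<^sup>2/(4*t))" for z
  have [measurable]: "k \<in> borel_measurable borel" unfolding k_def[abs_def] by measurable
  define C where "C = exp (-\<mu>*t) / c"
  have C: "C \<ge> 0" using c by (simp add: C_def)
  have K: "(\<integral>\<^sup>+z. ennreal (k z) \<partial>lborel) = ennreal c"
    unfolding k_def c_def using gaussN[OF t, where 'a="real^'n"] by simp
  have pw: "ennreal ((heat_sg \<mu> t \<psi> x)\<^sup>2) \<le> ennreal (C\<^sup>2) * (\<integral>\<^sup>+y. ennreal (k (x - y) * \<bar>\<psi> y\<bar>) \<partial>lborel)\<^sup>2" for x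
  proof -
    have hx: "heat_sg \<mu> t \<psi> x = C * (\<integral>y. \<psi> y * k (x - y) \<partial>lborel)"
      using False by (simp add: heat_sg_def C_def c_def k_def)
    have "ennreal \<bar>\<integral>y. \<psi> y * k (x - y) \<partial>lborel\<bar> \<le> (\<integral>\<^sup>+y. ennreal \<bar>\<psi> y * k (x - y)\<bar> \<partial>lborel)"
      by (rule abs_integral_le_nn)
    also have "\<dots> = (\<integral>\<^sup>+y. ennreal (k (x - y) * \<bar>\<psi> y\<bar>) \<partial>lborel)"
      by (simp add: k_def abs_mult mult.commute)
    finally have le: "ennreal \<bar>\<integral>y. \<psi> y * k (x - y) \<partial>lborel\<bar> \<le> (\<integral>\<^sup>+y. ennreal (k (x - y) * \<bar>\<psi> y\<bar>) \<partial>lborel)" .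
    have "ennreal ((heat_sg \<mu> t \<psi> x)\<^sup>2) = ennreal (C\<^sup>2) * (ennreal \<bar>\<integral>y. \<psi> y * k (x - y) \<partial>lborel\<bar>)\<^sup>2"
      unfolding hx using C by (simp add: ennreal_power ennreal_mult[symmetric] power_mult_distrib)
    also have "\<dots> \<le> ennreal (C\<^sup>2) * (\<integral>\<^sup>+y. ennreal (k (x - y) * \<bar>\<psi> y\<bar>) \<partial>lborel)\<^sup>2"
      by (intro mult_left_mono power_mono le) auto
    finally show ?thesis .
  qed
  have "(\<integral>\<^sup>+x. ennreal ((heat_sg \<mu> t \<psi> x)\<^sup>2) \<partial>lborel)
      \<le> (\<integral>\<^sup>+x. ennreal (C\<^sup>2) * (\<integral>\<^sup>+y. ennreal (k (x - y) * \<bar>\<psi> y\<bar>) \<partial>lborel)\<^sup>2 \<partial>lborel)"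
    by (rule nn_integral_mono) (rule pw)
  also have "\<dots> = ennreal (C\<^sup>2) * (\<integral>\<^sup>+x. (\<integral>\<^sup>+y. ennreal (k (x - y) * \<bar>\<psi> y\<bar>) \<partial>lborel)\<^sup>2 \<partial>lborel)"
    by (rule nn_integral_cmult) measurable
  also have "\<dots> \<le> ennreal (C\<^sup>2) * (ennreal c * ennreal c * (\<integral>\<^sup>+y. ennreal ((\<psi> y)\<^sup>2) \<partial>lborel))"
    by (intro mult_left_mono conv_bound K) (auto simp: k_def)
  also have "\<dots> = ennreal (C\<^sup>2 * c * c) * (\<integral>\<^sup>+y. ennreal ((\<psi> y)\<^sup>2) \<partial>lborel)"
    using c by (simp add: ennreal_mult mult.assoc)
  also have "C\<^sup>2 * c * c = (exp (-\<mu>*t))\<^sup>2"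
    using c by (simp add: C_def power2_eq_square)
  finally show ?thesis .
qed

lemma Hop_bound:
  fixes \<psi> :: "real^'n \<Rightarrow> real"
  assumes [measurable]: "\<psi> \<in> borel_measurable borel" and i: "\<iota> > 0"
  shows "(\<integral>\<^sup>+x. ennreal ((Hop \<iota> \<psi> x)\<^sup>2) \<partial>lborel) \<le> (\<integral>\<^sup>+y. ennreal ((\<psi> y)\<^sup>2) \<partial>lborel)"
proof -
  define k :: "real^'n \<Rightarrow> real" where "k = gauss_kernel \<iota>"
  have knn: "k z \<ge> 0" for z by (simp add: k_def gauss_kernel_def)
  have [measurable]: "k \<in> borel_measurable borel" unfolding k_def gauss_kernel_def[abs_def] by measurable
  have K: "(\<integral>\<^sup>+z. ennreal (k z) \<partial>lborel) = ennreal 1"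
  proof -
    have "(\<integral>\<^sup>+z. ennreal (k z) \<partial>lborel) = (\<integral>\<^sup>+z. ennreal ((4 * pi * \<iota>) powr (- real CARD('n) / 2)) * ennreal (exp (- (norm (z::real^'n))\<^sup>2 / (4 * \<iota>))) \<partial>lborel)"
      by (rule nn_integral_cong) (simp add: k_def gauss_kernel_def ennreal_mult[symmetric])
    also have "\<dots> = ennreal ((4 * pi * \<iota>) powr (- real CARD('n) / 2)) * ennreal ((4*pi*\<iota>) powr (real CARD('n)/2))"
      using gaussN[OF i, where 'a="real^'n"] by (subst nn_integral_cmult) auto
    also have "\<dots> = ennreal 1"
      using i by (simp add: ennreal_mult[symmetric] powr_add[symmetric])
    finally show ?thesis .
  qed
  have pw: "ennreal ((Hop \<iota> \<psi> x)\<^sup>2) \<le> (\<integral>\<^sup>+y. ennreal (k (x - y) * \<bar>\<psi> y\<bar>) \<partial>lborel)\<^sup>2" for x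
  proof -
    have "ennreal \<bar>Hop \<iota> \<psi> x\<bar> \<le> (\<integral>\<^sup>+y. ennreal \<bar>k (x - y) * \<psi> y\<bar> \<partial>lborel)"
      unfolding Hop_def k_def by (rule abs_integral_le_nn)
    also have "\<dots> = (\<integral>\<^sup>+y. ennreal (k (x - y) * \<bar>\<psi> y\<bar>) \<partial>lborel)"
      using knn by (simp add: abs_mult)
    finally have le: "ennreal \<bar>Hop \<iota> \<psi> x\<bar> \<le> (\<integral>\<^sup>+y. ennreal (k (x - y) * \<bar>\<psi> y\<bar>) \<partial>lborel)" .
    have "ennreal ((Hop \<iota> \<psi> x)\<^sup>2) = (ennreal \<bar>Hop \<iota> \<psi> x\<bar>)\<^sup>2"
      by (simp add: ennreal_power)
    also have "\<dots> \<le> (\<integral>\<^sup>+y. ennreal (k (x - y) * \<bar>\<psi> y\<bar>) \<partial>lborel)\<^sup>2"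
      by (intro power_mono le) auto
    finally show ?thesis .
  qed
  have "(\<integral>\<^sup>+x. ennreal ((Hop \<iota> \<psi> x)\<^sup>2) \<partial>lborel) \<le> (\<integral>\<^sup>+x. (\<integral>\<^sup>+y. ennreal (k (x - y) * \<bar>\<psi> y\<bar>) \<partial>lborel)\<^sup>2 \<partial>lborel)"
    by (rule nn_integral_mono) (rule pw)
  also have "\<dots> \<le> ennreal 1 * ennreal 1 * (\<integral>\<^sup>+y. ennreal ((\<psi> y)\<^sup>2) \<partial>lborel)"
    by (rule conv_bound) (auto simp: knn K)
  finally show ?thesis by simp
qed



lemma minkowski_int:
  fixes F :: "real \<Rightarrow> 'a::euclidean_space \<Rightarrow> ennreal" and W :: "real \<Rightarrow> real"
  assumes [measurable]: "case_prod F \<in> borel_measurable (lborel \<Otimes>\<^sub>M lborel)"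
    and [measurable]: "W \<in> borel_measurable borel"
    and Wpos: "\<And>s. s \<in> {0..t} \<Longrightarrow> W s > 0"
    and Fb: "\<And>s. s \<in> {0..t} \<Longrightarrow> (\<integral>\<^sup>+x. (F s x)\<^sup>2 \<partial>lborel) \<le> ennreal ((W s)\<^sup>2)"
  shows "(\<integral>\<^sup>+x. (\<integral>\<^sup>+s. indicator {0..t} s * F s x \<partial>lborel)\<^sup>2 \<partial>lborel)
          \<le> (\<integral>\<^sup>+s. indicator {0..t} s * ennreal (W s) \<partial>lborel)\<^sup>2"
proof -
  define I where "I = (\<integral>\<^sup>+s. indicator {0..t} s * ennreal (W s) \<partial>lborel)"
  define G where "G s x = indicator {0..t} s * ennreal (1 / W s) * (F s x)\<^sup>2" for s x
  have [measurable]: "case_prod G \<in> borel_measurable (lborel \<Otimes>\<^sub>M lborel)"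
    unfolding G_def by measurable
  have pw: "(\<integral>\<^sup>+s. indicator {0..t} s * F s x \<partial>lborel)\<^sup>2 \<le> I * (\<integral>\<^sup>+s. G s x \<partial>lborel)" for x
  proof -
    define f where "f s = (indicator {0..t} s :: ennreal) * ennreal (sqrt (W s))" for s
    define g where "g s = (indicator {0..t} s :: ennreal) * ennreal (1 / sqrt (W s)) * F s x" for s
    have [measurable]: "f \<in> borel_measurable lborel" unfolding f_def by measurable
    have [measurable]: "g \<in> borel_measurable lborel" unfolding g_def by measurable
    have e1: "indicator {0..t} s * F s x = f s * g s" for s
    proof (cases "s \<in> {0..t}")
      case True
      then have "W s > 0" by (rule Wpos)
      then have "ennreal (sqrt (W s)) * ennreal (1 / sqrt (W s)) = 1"
        by (simp add: ennreal_mult[symmetric])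
      then show ?thesis using True unfolding f_def g_def
        by (simp add: mult.assoc[symmetric])
    qed (simp add: f_def g_def)
    have e2: "(f s)\<^sup>2 = indicator {0..t} s * ennreal (W s)" for s
    proof (cases "s \<in> {0..t}")
      case True
      then have "W s > 0" by (rule Wpos)
      then show ?thesis using True unfolding f_def by (simp add: ennreal_power)
    qed (simp add: f_def)
    have e3: "(g s)\<^sup>2 = G s x" for s
    proof (cases "s \<in> {0..t}")
      case True
      then have "W s > 0" by (rule Wpos)
      then have "(ennreal (1 / sqrt (W s)))\<^sup>2 = ennreal (1 / W s)"
        by (simp add: ennreal_power power_divide)
      then show ?thesis using True unfolding g_def G_def by (simp add: power_mult_distrib)
    qed (simp add: g_def G_def)
    have "(\<integral>\<^sup>+s. indicator {0..t} s * F s x \<partial>lborel)\<^sup>2 = (\<integral>\<^sup>+s. f s * g s \<partial>lborel)\<^sup>2"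
      unfolding e1 ..
    also have "\<dots> \<le> (\<integral>\<^sup>+s. (f s)\<^sup>2 \<partial>lborel) * (\<integral>\<^sup>+s. (g s)\<^sup>2 \<partial>lborel)"
      by (rule Cauchy_Schwarz_nn_integral) measurable
    finally show ?thesis unfolding e2 e3 I_def .
  qed
  have "(\<integral>\<^sup>+x. (\<integral>\<^sup>+s. indicator {0..t} s * F s x \<partial>lborel)\<^sup>2 \<partial>lborel)
     \<le> (\<integral>\<^sup>+x. I * (\<integral>\<^sup>+s. G s x \<partial>lborel) \<partial>lborel)"
    by (rule nn_integral_mono) (rule pw)
  also have "\<dots> = I * (\<integral>\<^sup>+x. (\<integral>\<^sup>+s. G s x \<partial>lborel) \<partial>lborel)"
    by (rule nn_integral_cmult) measurable
  also have "(\<integral>\<^sup>+x. (\<integral>\<^sup>+s. G s x \<partial>lborel) \<partial>lborel) = (\<integral>\<^sup>+s. (\<integral>\<^sup>+x. G s x \<partial>lborel) \<partial>lborel)"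
    by (rule lborel_pair.Fubini') measurable
  also have "\<dots> \<le> (\<integral>\<^sup>+s. indicator {0..t} s * ennreal (W s) \<partial>lborel)"
  proof (rule nn_integral_mono)
    fix s
    show "(\<integral>\<^sup>+x. G s x \<partial>lborel) \<le> indicator {0..t} s * ennreal (W s)"
    proof (cases "s \<in> {0..t}")
      case True
      then have W: "W s > 0" by (rule Wpos)
      have "(\<integral>\<^sup>+x. G s x \<partial>lborel) = ennreal (1 / W s) * (\<integral>\<^sup>+x. (F s x)\<^sup>2 \<partial>lborel)"
      proof -
        have [measurable]: "F s \<in> borel_measurable lborel"
          using measurable_Pair2[OF assms(1), of s] by simp
        have "(\<integral>\<^sup>+x. G s x \<partial>lborel) = (\<integral>\<^sup>+x. ennreal (1 / W s) * (F s x)\<^sup>2 \<partial>lborel)"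
          using True by (intro nn_integral_cong) (simp add: G_def indicator_def)
        also have "\<dots> = ennreal (1 / W s) * (\<integral>\<^sup>+x. (F s x)\<^sup>2 \<partial>lborel)"
          by (rule nn_integral_cmult) measurable
        finally show ?thesis .
      qed
      also have "\<dots> \<le> ennreal (1 / W s) * ennreal ((W s)\<^sup>2)"
        by (intro mult_left_mono Fb True) auto
      also have "\<dots> = ennreal (W s)"
        using W by (simp add: ennreal_mult[symmetric] power2_eq_square)
      finally show ?thesis using True by simp
    qed (simp add: G_def)
  qed
  finally show ?thesis unfolding I_def by (simp add: power2_eq_square mult_left_mono)
qed



lemma ennreal_sq_le_imp:
  assumes "(X::ennreal)\<^sup>2 \<le> ennreal (y\<^sup>2)" "y \<ge> 0"
  shows "X \<le> ennreal y"
proof (cases X rule: ennreal_cases)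
  case (real x)
  then have "x\<^sup>2 \<le> y\<^sup>2" using assms by (simp add: ennreal_power)
  then have "x \<le> y" using assms(2) real(1) by (simp add: abs_le_square_iff[symmetric])
  then show ?thesis using real by simp
next
  case top
  then have "(ennreal y)\<^sup>2 = ennreal (y\<^sup>2)" using assms(2) by (simp add: ennreal_power)
  then show ?thesis using assms top by (simp add: top_unique)
qed

lemma tri2:
  fixes a b :: "'x \<Rightarrow> ennreal"
  assumes [measurable]: "a \<in> borel_measurable M" "b \<in> borel_measurable M"
    and A: "(\<integral>\<^sup>+x. (a x)\<^sup>2 \<partial>M) \<le> ennreal (A\<^sup>2)" "A \<ge> 0"
    and B: "(\<integral>\<^sup>+x. (b x)\<^sup>2 \<partial>M) \<le> ennreal (B\<^sup>2)" "B \<ge> 0"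
  shows "(\<integral>\<^sup>+x. (a x + b x)\<^sup>2 \<partial>M) \<le> ennreal ((A + B)\<^sup>2)"
proof -
  have ab: "(\<integral>\<^sup>+x. a x * b x \<partial>M) \<le> ennreal (A * B)"
  proof (rule ennreal_sq_le_imp)
    have "(\<integral>\<^sup>+x. a x * b x \<partial>M)\<^sup>2 \<le> (\<integral>\<^sup>+x. (a x)\<^sup>2 \<partial>M) * (\<integral>\<^sup>+x. (b x)\<^sup>2 \<partial>M)"
      by (rule Cauchy_Schwarz_nn_integral) measurable
    also have "\<dots> \<le> ennreal (A\<^sup>2) * ennreal (B\<^sup>2)"
      by (intro mult_mono A B) auto
    also have "\<dots> = ennreal ((A * B)\<^sup>2)"
      using A B by (simp add: ennreal_mult[symmetric] power_mult_distrib)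
    finally show "(\<integral>\<^sup>+x. a x * b x \<partial>M)\<^sup>2 \<le> ennreal ((A * B)\<^sup>2)" .
  qed (use A B in auto)
  have "(\<integral>\<^sup>+x. (a x + b x)\<^sup>2 \<partial>M) = (\<integral>\<^sup>+x. (a x)\<^sup>2 + 2 * (a x * b x) + (b x)\<^sup>2 \<partial>M)"
    by (simp add: power2_sum mult.assoc add_ac)
  also have "\<dots> = (\<integral>\<^sup>+x. (a x)\<^sup>2 \<partial>M) + 2 * (\<integral>\<^sup>+x. a x * b x \<partial>M) + (\<integral>\<^sup>+x. (b x)\<^sup>2 \<partial>M)"
    by (simp add: nn_integral_add nn_integral_cmult)
  also have "\<dots> \<le> ennreal (A\<^sup>2) + 2 * ennreal (A * B) + ennreal (B\<^sup>2)"
    by (intro add_mono mult_left_mono A B ab) auto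
  also have "\<dots> = ennreal ((A + B)\<^sup>2)"
  proof -
    have "2 * ennreal (A * B) = ennreal (2 * (A * B))"
      using A B by (simp add: ennreal_mult)
    then show ?thesis
      using A B by (simp add: power2_sum ennreal_plus[symmetric] mult.assoc del: ennreal_plus)
  qed
  finally show ?thesis .
qed

lemma nn_L2:
  fixes h :: "real^'n \<Rightarrow> real"
  assumes "L2 h"
  shows "(\<integral>\<^sup>+x. ennreal ((h x)\<^sup>2) \<partial>lborel) = ennreal ((L2norm h)\<^sup>2)"
proof -
  have "integrable lborel (\<lambda>x. (h x)\<^sup>2)" using assms by (simp add: L2_def)
  moreover have "0 \<le> (\<integral>x. (h x)\<^sup>2 \<partial>lborel)" by simp
  ultimately show ?thesis unfolding L2norm_def
    by (subst nn_integral_eq_integral) auto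
qed

lemma L2norm_nonneg: "L2norm h \<ge> 0" by (simp add: L2norm_def)

lemma L2_meas: "L2 h \<Longrightarrow> h \<in> borel_measurable borel"
  by (simp add: L2_def)

lemma L2norm_le_from_nn:
  fixes h :: "real^'n \<Rightarrow> real"
  assumes "L2 h" "(\<integral>\<^sup>+x. ennreal ((h x)\<^sup>2) \<partial>lborel) \<le> ennreal (A\<^sup>2)" "A \<ge> 0"
  shows "L2norm h \<le> A"
  using assms nn_L2[OF assms(1)] L2norm_nonneg[of h]
  by (simp add: abs_le_square_iff[symmetric])

lemma sq_abs_ennreal: "ennreal ((h::real)\<^sup>2) = (ennreal \<bar>h\<bar>)\<^sup>2"
  by (simp add: ennreal_power)

lemma L2norm_tri:
  fixes a b :: "real^'n \<Rightarrow> real"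
  assumes "L2 a" "L2 b" "L2 (\<lambda>x. a x - b x)"
  shows "L2norm a \<le> L2norm b + L2norm (\<lambda>x. a x - b x)"
proof (rule L2norm_le_from_nn[OF assms(1)])
  have [measurable]: "a \<in> borel_measurable borel" "b \<in> borel_measurable borel"
    using assms by (auto simp: L2_def)
  have "(\<integral>\<^sup>+x. ennreal ((a x)\<^sup>2) \<partial>lborel) \<le> (\<integral>\<^sup>+x. (ennreal \<bar>b x\<bar> + ennreal \<bar>a x - b x\<bar>)\<^sup>2 \<partial>lborel)"
  proof (rule nn_integral_mono)
    fix x
    have "ennreal \<bar>a x\<bar> \<le> ennreal \<bar>b x\<bar> + ennreal \<bar>a x - b x\<bar>"
      by (simp add: ennreal_plus[symmetric] del: ennreal_plus)
    then show "ennreal ((a x)\<^sup>2) \<le> (ennreal \<bar>b x\<bar> + ennreal \<bar>a x - b x\<bar>)\<^sup>2"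
      unfolding sq_abs_ennreal by (intro power_mono) auto
  qed
  also have "\<dots> \<le> ennreal ((L2norm b + L2norm (\<lambda>x. a x - b x))\<^sup>2)"
  proof (rule tri2)
    show "(\<integral>\<^sup>+x. (ennreal \<bar>b x\<bar>)\<^sup>2 \<partial>lborel) \<le> ennreal ((L2norm b)\<^sup>2)"
      using nn_L2[OF assms(2)] by (simp add: sq_abs_ennreal)
    show "(\<integral>\<^sup>+x. (ennreal \<bar>a x - b x\<bar>)\<^sup>2 \<partial>lborel) \<le> ennreal ((L2norm (\<lambda>x. a x - b x))\<^sup>2)"
      using nn_L2[OF assms(3)] by (simp add: sq_abs_ennreal)
  qed (auto simp: L2norm_nonneg)
  finally show "(\<integral>\<^sup>+x. ennreal ((a x)\<^sup>2) \<partial>lborel) \<le> ennreal ((L2norm b + L2norm (\<lambda>x. a x - b x))\<^sup>2)" .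
qed (simp add: L2norm_nonneg add_nonneg_nonneg)

lemma L2_diff:
  fixes a b :: "real^'n \<Rightarrow> real"
  assumes "L2 a" "L2 b"
  shows "L2 (\<lambda>x. a x - b x)"
proof -
  have [measurable]: "a \<in> borel_measurable borel" "b \<in> borel_measurable borel"
    using assms by (auto simp: L2_def)
  have "integrable lborel (\<lambda>x. 2 * (a x)\<^sup>2 + 2 * (b x)\<^sup>2)"
    using assms by (auto simp: L2_def)
  then have "integrable lborel (\<lambda>x. (a x - b x)\<^sup>2)"
  proof (rule Bochner_Integration.integrable_bound)
    have "(a x - b x)\<^sup>2 \<le> 2 * (a x)\<^sup>2 + 2 * (b x)\<^sup>2" for x
    proof -
      have "0 \<le> (a x + b x)\<^sup>2" by simp
      then show ?thesis by (simp add: power2_eq_square algebra_simps)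
    qed
    then show "AE x in lborel. norm ((a x - b x)\<^sup>2) \<le> norm (2 * (a x)\<^sup>2 + 2 * (b x)\<^sup>2)"
      by (intro AE_I2) simp
  qed measurable
  then show ?thesis by (simp add: L2_def)
qed

lemma L2norm_commute: "L2norm (\<lambda>x. a x - b x) = L2norm (\<lambda>x. b x - a x)"
  by (simp add: L2norm_def power2_commute)



lemma exp_int:
  assumes c: "c \<noteq> 0" and t: "t \<ge> 0"
  shows "(\<integral>\<^sup>+s. indicator {0..t} s * ennreal (exp (c * s)) \<partial>lborel) = ennreal ((exp (c * t) - 1)/c)"
proof -
  have "((\<lambda>s. exp (c * s)) has_integral (exp (c * t)/c - exp (c * 0)/c)) {0..t}"
  proof (rule fundamental_theorem_of_calculus[OF t])
    fix x assume "x \<in> {0..t}"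
    show "((\<lambda>s. exp (c * s)/c) has_vector_derivative exp (c * x)) (at x within {0..t})"
      using c by (auto intro!: derivative_eq_intros simp: has_real_derivative_iff_has_vector_derivative[symmetric])
  qed
  then have "((\<lambda>s. exp (c * s)) has_integral ((exp (c * t) - 1)/c)) {0..t}"
    by (simp add: diff_divide_distrib)
  from nn_integral_has_integral_lebesgue[OF _ this] have
    "(\<integral>\<^sup>+s. ennreal (indicator {0..t} s * exp (c * s)) \<partial>lborel) = ennreal ((exp (c * t) - 1)/c)"
    by simp
  moreover have "(\<integral>\<^sup>+s. ennreal (indicator {0..t} s * exp (c * s)) \<partial>lborel)
     = (\<integral>\<^sup>+s. indicator {0..t} s * ennreal (exp (c * s)) \<partial>lborel)"
    by (rule nn_integral_cong) (simp split: split_indicator)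
  ultimately show ?thesis by simp
qed



lemma heat_meas:
  fixes \<Psi> :: "real \<Rightarrow> real^'n \<Rightarrow> real"
  assumes [measurable]: "(\<lambda>p. \<Psi> (fst p) (snd p)) \<in> borel_measurable (lborel \<Otimes>\<^sub>M lborel)"
  shows "(\<lambda>p. heat_sg \<mu> (t - fst p) (\<Psi> (fst p)) (snd p)) \<in> borel_measurable (lborel \<Otimes>\<^sub>M lborel)"
proof -
  have m1: "(\<lambda>q. (fst (fst q), snd q)) \<in> measurable ((lborel \<Otimes>\<^sub>M lborel) \<Otimes>\<^sub>M lborel) (lborel \<Otimes>\<^sub>M (lborel::(real^'n) measure))"
    by (intro measurable_Pair measurable_compose[OF measurable_fst measurable_fst] measurable_snd)
  have [measurable]: "(\<lambda>q. \<Psi> (fst (fst q)) (snd q)) \<in> borel_measurable ((lborel \<Otimes>\<^sub>M lborel) \<Otimes>\<^sub>M lborel)"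
    using measurable_compose[OF m1 assms] by simp
  have [measurable]: "(\<lambda>p. \<integral>y. \<Psi> (fst p) y * exp (- (norm (snd p - y))\<^sup>2 / (4 * (t - fst p))) \<partial>lborel)
      \<in> borel_measurable (lborel \<Otimes>\<^sub>M lborel)"
    by (rule lborel.borel_measurable_lebesgue_integral) (simp add: split_beta', measurable)
  show ?thesis unfolding heat_sg_def by measurable
qed

lemma hop_meas:
  fixes \<Psi> :: "real \<Rightarrow> real^'n \<Rightarrow> real"
  assumes [measurable]: "(\<lambda>p. \<Psi> (fst p) (snd p)) \<in> borel_measurable (lborel \<Otimes>\<^sub>M lborel)"
  shows "(\<lambda>p. Hop \<iota> (\<Psi> (fst p)) (snd p)) \<in> borel_measurable (lborel \<Otimes>\<^sub>M lborel)"
proof -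
  have m1: "(\<lambda>q. (fst (fst q), snd q)) \<in> measurable ((lborel \<Otimes>\<^sub>M lborel) \<Otimes>\<^sub>M lborel) (lborel \<Otimes>\<^sub>M (lborel::(real^'n) measure))"
    by (intro measurable_Pair measurable_compose[OF measurable_fst measurable_fst] measurable_snd)
  have [measurable]: "(\<lambda>q. \<Psi> (fst (fst q)) (snd q)) \<in> borel_measurable ((lborel \<Otimes>\<^sub>M lborel) \<Otimes>\<^sub>M lborel)"
    using measurable_compose[OF m1 assms] by simp
  show ?thesis unfolding Hop_def gauss_kernel_def
    by (rule lborel.borel_measurable_lebesgue_integral) (simp add: split_beta', measurable)
qed



lemma shift_meas:
  fixes w :: "real \<Rightarrow> real^'n \<Rightarrow> real"
  assumes "(\<lambda>(s, x). w s x) \<in> borel_measurable (lborel \<Otimes>\<^sub>M lborel)"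
  shows "(\<lambda>p. w (fst p - \<tau>) (snd p)) \<in> borel_measurable (lborel \<Otimes>\<^sub>M lborel)"
proof -
  have m1: "(\<lambda>q. (fst q - \<tau>, snd q)) \<in> measurable (lborel \<Otimes>\<^sub>M lborel) (lborel \<Otimes>\<^sub>M (lborel::(real^'n) measure))"
    by (intro measurable_Pair measurable_snd) (simp add: measurable_fst'' )
  show ?thesis using measurable_compose[OF m1 assms] by (simp add: split_beta')
qed

lemma L2norm_meas:
  fixes w :: "real \<Rightarrow> real^'n \<Rightarrow> real"
  assumes [measurable]: "(\<lambda>p. w (fst p) (snd p)) \<in> borel_measurable (lborel \<Otimes>\<^sub>M lborel)"
  shows "(\<lambda>s. L2norm (w s)) \<in> borel_measurable lborel"
proof -
  have "(\<lambda>s. \<integral>x. (w s x)\<^sup>2 \<partial>lborel) \<in> borel_measurable lborel"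
    by (rule lborel.borel_measurable_lebesgue_integral) (simp add: split_beta', measurable)
  then show ?thesis unfolding L2norm_def by measurable
qed



lemma step_ineq:
  fixes w :: "real \<Rightarrow> real^'n \<Rightarrow> real" and \<phi>0 g :: "real^'n \<Rightarrow> real"
    and f :: "(real^'n \<Rightarrow> real) \<Rightarrow> (real^'n \<Rightarrow> real)"
  assumes \<tau>: "\<tau> > 0" and \<mu>: "\<mu> > 0" and \<sigma>: "\<sigma> > 0" and \<iota>: "\<iota> > 0"
    and Lg: "L2 g" and Nb: "Nbar > 0"
    and f_L2: "\<And>\<psi>. L2 \<psi> \<Longrightarrow> L2 (f \<psi>)"
    and f_bdd: "\<And>\<psi>. L2 \<psi> \<Longrightarrow> L2norm (f \<psi>) \<le> Nbar"
    and L2w: "\<And>r. r \<ge> -\<tau> \<Longrightarrow> L2 (w r)"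
    and measw: "(\<lambda>(s, x). w s x) \<in> borel_measurable (lborel \<Otimes>\<^sub>M lborel)"
    and measf: "(\<lambda>(s, x). f (w s) x) \<in> borel_measurable (lborel \<Otimes>\<^sub>M lborel)"
    and L\<phi>: "L2 \<phi>0"
    and t: "t > 0"
    and eq: "AE x in lborel.
        w t x = heat_sg \<mu> t \<phi>0 x
          + \<sigma> * (LINT s:{0..t}|lborel. heat_sg \<mu> (t - s) (w (s - \<tau>)) x)
          + (LINT s:{0..t}|lborel. heat_sg \<mu> (t - s) (\<lambda>y. Hop \<iota> (f (w (s - \<tau>))) y + g y) x)"
    and \<epsilon>: "\<epsilon> > 0"
    and J: "(\<integral>\<^sup>+s. indicator {0..t} s * ennreal (exp (-\<mu>*(t-s)) * (L2norm (w (s-\<tau>)) + \<epsilon>)) \<partial>lborel) \<le> ennreal J"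
    and J0: "J \<ge> 0"
  shows "L2norm (w t) \<le> exp (-\<mu>*t) * L2norm \<phi>0 + \<sigma>*J + (Nbar + L2norm g)/\<mu>"
proof -
  define M where "M = Nbar + L2norm g"
  have M: "M > 0" using Nb L2norm_nonneg[of g] by (simp add: M_def)
  have [measurable]: "g \<in> borel_measurable borel" "\<phi>0 \<in> borel_measurable borel"
    using Lg L\<phi> by (auto simp: L2_def)
  have [measurable]: "(\<lambda>p. w (fst p - \<tau>) (snd p)) \<in> borel_measurable (lborel \<Otimes>\<^sub>M lborel)"
    by (rule shift_meas[OF measw])
  have [measurable]: "(\<lambda>p. f (w (fst p - \<tau>)) (snd p)) \<in> borel_measurable (lborel \<Otimes>\<^sub>M lborel)"
    using shift_meas[where w="\<lambda>s. f (w s)", OF measf, of \<tau>] by simp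
  have [measurable]: "(\<lambda>p. Hop \<iota> (f (w (fst p - \<tau>))) (snd p)) \<in> borel_measurable (lborel \<Otimes>\<^sub>M lborel)"
    by (rule hop_meas) measurable
  have mg2: "(\<lambda>p. g (snd p)) \<in> borel_measurable (lborel \<Otimes>\<^sub>M (lborel :: (real^'n) measure))"
    by measurable
  have [measurable]: "(\<lambda>p. Hop \<iota> (f (w (fst p - \<tau>))) (snd p) + g (snd p)) \<in> borel_measurable (lborel \<Otimes>\<^sub>M lborel)"
    using mg2 by measurable
  define F1 where "F1 s x = ennreal \<bar>heat_sg \<mu> (t - s) (w (s - \<tau>)) x\<bar>" for s x
  define F2 where "F2 s x = ennreal \<bar>heat_sg \<mu> (t - s) (\<lambda>y. Hop \<iota> (f (w (s - \<tau>))) y + g y) x\<bar>" for s x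
  have mF1[measurable]: "case_prod F1 \<in> borel_measurable (lborel \<Otimes>\<^sub>M lborel)"
  proof -
    have "(\<lambda>p. heat_sg \<mu> (t - fst p) (w (fst p - \<tau>)) (snd p)) \<in> borel_measurable (lborel \<Otimes>\<^sub>M lborel)"
      by (rule heat_meas[where \<Psi>="\<lambda>s. w (s - \<tau>)"]) measurable
    then show ?thesis unfolding F1_def split_beta' by measurable
  qed
  have mF2[measurable]: "case_prod F2 \<in> borel_measurable (lborel \<Otimes>\<^sub>M lborel)"
  proof -
    have "(\<lambda>p. heat_sg \<mu> (t - fst p) (\<lambda>y. Hop \<iota> (f (w (fst p - \<tau>))) y + g y) (snd p)) \<in> borel_measurable (lborel \<Otimes>\<^sub>M lborel)"
      by (rule heat_meas[where \<Psi>="\<lambda>s y. Hop \<iota> (f (w (s - \<tau>))) y + g y"]) measurable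
    then show ?thesis unfolding F2_def split_beta' by measurable
  qed
  define a where "a x = ennreal \<bar>heat_sg \<mu> t \<phi>0 x\<bar>" for x
  define b where "b x = ennreal \<sigma> * (\<integral>\<^sup>+s. indicator {0..t} s * F1 s x \<partial>lborel)" for x
  define c where "c x = (\<integral>\<^sup>+s. indicator {0..t} s * F2 s x \<partial>lborel)" for x
  have ma[measurable]: "a \<in> borel_measurable lborel"
  proof -
    have "(\<lambda>p. heat_sg \<mu> (t - fst p) ((\<lambda>s. \<phi>0) (fst p)) (snd p)) \<in> borel_measurable (lborel \<Otimes>\<^sub>M lborel)"
      by (rule heat_meas) measurable
    from measurable_Pair2[OF this[unfolded split_beta'[symmetric]], of 0]
    show ?thesis unfolding a_def by simp
  qed
  have mb[measurable]: "b \<in> borel_measurable lborel"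
    unfolding b_def by measurable
  have mc[measurable]: "c \<in> borel_measurable lborel"
    unfolding c_def by measurable

  have absLINT: "ennreal \<bar>LINT s:{0..t}|lborel. h s\<bar> \<le> (\<integral>\<^sup>+s. indicator {0..t} s * ennreal \<bar>h s\<bar> \<partial>lborel)"
    for h :: "real \<Rightarrow> real"
  proof -
    have "ennreal \<bar>LINT s:{0..t}|lborel. h s\<bar> \<le> (\<integral>\<^sup>+s. ennreal \<bar>indicator {0..t} s *\<^sub>R h s\<bar> \<partial>lborel)"
      unfolding set_lebesgue_integral_def by (rule abs_integral_le_nn)
    also have "\<dots> = (\<integral>\<^sup>+s. indicator {0..t} s * ennreal \<bar>h s\<bar> \<partial>lborel)"
      by (rule nn_integral_cong) (simp split: split_indicator)
    finally show ?thesis .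
  qed
  have pw: "AE x in lborel. (ennreal \<bar>w t x\<bar>)\<^sup>2 \<le> (a x + b x + c x)\<^sup>2"
    using eq
  proof (rule AE_mp, intro AE_I2 impI)
    fix x
    assume e: "w t x = heat_sg \<mu> t \<phi>0 x
          + \<sigma> * (LINT s:{0..t}|lborel. heat_sg \<mu> (t - s) (w (s - \<tau>)) x)
          + (LINT s:{0..t}|lborel. heat_sg \<mu> (t - s) (\<lambda>y. Hop \<iota> (f (w (s - \<tau>))) y + g y) x)"
    define L1 where "L1 = (LINT s:{0..t}|lborel. heat_sg \<mu> (t - s) (w (s - \<tau>)) x)"
    define L2' where "L2' = (LINT s:{0..t}|lborel. heat_sg \<mu> (t - s) (\<lambda>y. Hop \<iota> (f (w (s - \<tau>))) y + g y) x)"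
    have l1: "ennreal \<bar>L1\<bar> \<le> (\<integral>\<^sup>+s. indicator {0..t} s * F1 s x \<partial>lborel)"
      unfolding L1_def F1_def by (rule absLINT)
    have l2: "ennreal \<bar>L2'\<bar> \<le> c x"
      unfolding L2'_def c_def F2_def by (rule absLINT)
    have sL: "\<bar>\<sigma> * L1\<bar> = \<sigma> * \<bar>L1\<bar>" using \<sigma> by (simp add: abs_mult)
    have "\<bar>w t x\<bar> \<le> \<bar>heat_sg \<mu> t \<phi>0 x\<bar> + \<sigma> * \<bar>L1\<bar> + \<bar>L2'\<bar>"
      unfolding e L1_def[symmetric] L2'_def[symmetric]
      using abs_triangle_ineq[of "heat_sg \<mu> t \<phi>0 x + \<sigma> * L1" L2'] abs_triangle_ineq[of "heat_sg \<mu> t \<phi>0 x" "\<sigma> * L1"] sL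
      by linarith
    then have "ennreal \<bar>w t x\<bar> \<le> ennreal (\<bar>heat_sg \<mu> t \<phi>0 x\<bar> + \<sigma> * \<bar>L1\<bar> + \<bar>L2'\<bar>)"
      by (rule ennreal_leI)
    also have "\<dots> = a x + ennreal \<sigma> * ennreal \<bar>L1\<bar> + ennreal \<bar>L2'\<bar>"
      unfolding a_def using \<sigma> by (simp add: ennreal_plus[symmetric] ennreal_mult[symmetric] del: ennreal_plus)
    also have "\<dots> \<le> a x + b x + c x"
      unfolding b_def by (intro add_mono mult_left_mono l1 l2) auto
    finally show "(ennreal \<bar>w t x\<bar>)\<^sup>2 \<le> (a x + b x + c x)\<^sup>2"
      by (intro power_mono) auto
  qed
  define A where "A = exp (-\<mu>*t) * L2norm \<phi>0"
  define B where "B = \<sigma> * J"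
  define C where "C = M / \<mu>"
  have A0: "A \<ge> 0" and B0: "B \<ge> 0" and C0: "C \<ge> 0"
    using L2norm_nonneg[of \<phi>0] \<sigma> J0 M \<mu> by (auto simp: A_def B_def C_def)
  have Abd: "(\<integral>\<^sup>+x. (a x)\<^sup>2 \<partial>lborel) \<le> ennreal (A\<^sup>2)"
  proof -
    have "(\<integral>\<^sup>+x. (a x)\<^sup>2 \<partial>lborel) = (\<integral>\<^sup>+x. ennreal ((heat_sg \<mu> t \<phi>0 x)\<^sup>2) \<partial>lborel)"
      unfolding a_def sq_abs_ennreal ..
    also have "\<dots> \<le> ennreal ((exp (-\<mu>*t))\<^sup>2) * (\<integral>\<^sup>+y. ennreal ((\<phi>0 y)\<^sup>2) \<partial>lborel)"
      using t by (intro heat_bound) auto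
    also have "\<dots> = ennreal (A\<^sup>2)"
      unfolding nn_L2[OF L\<phi>] A_def by (simp add: ennreal_mult[symmetric] power_mult_distrib)
    finally show ?thesis .
  qed
  have Bbd: "(\<integral>\<^sup>+x. (b x)\<^sup>2 \<partial>lborel) \<le> ennreal (B\<^sup>2)"
  proof -
    define W1 where "W1 s = exp (-\<mu>*(t-s)) * (L2norm (w (s-\<tau>)) + \<epsilon>)" for s
    have [measurable]: "W1 \<in> borel_measurable borel"
    proof -
      have "(\<lambda>s. L2norm (w (s - \<tau>))) \<in> borel_measurable lborel"
        by (rule L2norm_meas[where w="\<lambda>s. w (s - \<tau>)"]) measurable
      then show ?thesis unfolding W1_def by simp
    qed
    have mink: "(\<integral>\<^sup>+x. (\<integral>\<^sup>+s. indicator {0..t} s * F1 s x \<partial>lborel)\<^sup>2 \<partial>lborel)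
          \<le> (\<integral>\<^sup>+s. indicator {0..t} s * ennreal (W1 s) \<partial>lborel)\<^sup>2"
    proof (rule minkowski_int)
      fix s :: real assume s: "s \<in> {0..t}"
      show "W1 s > 0" unfolding W1_def using \<epsilon> L2norm_nonneg[of "w (s - \<tau>)"]
        by (intro mult_pos_pos) auto
      have Lw: "L2 (w (s - \<tau>))" using s \<tau> by (intro L2w) auto
      have "(\<integral>\<^sup>+x. (F1 s x)\<^sup>2 \<partial>lborel) = (\<integral>\<^sup>+x. ennreal ((heat_sg \<mu> (t - s) (w (s - \<tau>)) x)\<^sup>2) \<partial>lborel)"
        unfolding F1_def sq_abs_ennreal ..
      also have "\<dots> \<le> ennreal ((exp (-\<mu>*(t-s)))\<^sup>2) * (\<integral>\<^sup>+y. ennreal ((w (s - \<tau>) y)\<^sup>2) \<partial>lborel)"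
        using s Lw by (intro heat_bound) (auto simp: L2_def)
      also have "\<dots> = ennreal ((exp (-\<mu>*(t-s)) * L2norm (w (s - \<tau>)))\<^sup>2)"
        unfolding nn_L2[OF Lw] by (simp add: ennreal_mult[symmetric] power_mult_distrib)
      also have "\<dots> \<le> ennreal ((W1 s)\<^sup>2)"
        unfolding W1_def using \<epsilon> L2norm_nonneg[of "w (s - \<tau>)"]
        by (intro ennreal_leI power_mono mult_left_mono) auto
      finally show "(\<integral>\<^sup>+x. (F1 s x)\<^sup>2 \<partial>lborel) \<le> ennreal ((W1 s)\<^sup>2)" .
    qed measurable
    have "(\<integral>\<^sup>+x. (b x)\<^sup>2 \<partial>lborel) = ennreal (\<sigma>\<^sup>2) * (\<integral>\<^sup>+x. (\<integral>\<^sup>+s. indicator {0..t} s * F1 s x \<partial>lborel)\<^sup>2 \<partial>lborel)"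
      unfolding b_def using \<sigma>
      by (subst nn_integral_cmult[symmetric]) (measurable, simp add: power_mult_distrib ennreal_power)
    also have "\<dots> \<le> ennreal (\<sigma>\<^sup>2) * (ennreal J)\<^sup>2"
      using mink J unfolding W1_def
      by (intro mult_left_mono order.trans[OF mink] power_mono) (auto simp: W1_def)
    also have "\<dots> = ennreal (B\<^sup>2)"
      unfolding B_def using \<sigma> J0 by (simp add: ennreal_power ennreal_mult[symmetric] power_mult_distrib)
    finally show ?thesis .
  qed

  have Cbd: "(\<integral>\<^sup>+x. (c x)\<^sup>2 \<partial>lborel) \<le> ennreal (C\<^sup>2)"
  proof -
    define W2 where "W2 s = exp (-\<mu>*(t-s)) * M" for s
    have [measurable]: "W2 \<in> borel_measurable borel" unfolding W2_def by measurable
    have mink: "(\<integral>\<^sup>+x. (c x)\<^sup>2 \<partial>lborel)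
          \<le> (\<integral>\<^sup>+s. indicator {0..t} s * ennreal (W2 s) \<partial>lborel)\<^sup>2"
      unfolding c_def
    proof (rule minkowski_int)
      fix s :: real assume s: "s \<in> {0..t}"
      show "W2 s > 0" unfolding W2_def using M by simp
      have Lw: "L2 (w (s - \<tau>))" using s \<tau> by (intro L2w) auto
      have Lf: "L2 (f (w (s - \<tau>)))" by (rule f_L2[OF Lw])
      have [measurable]: "f (w (s - \<tau>)) \<in> borel_measurable borel" using Lf by (simp add: L2_def)
      define \<psi> where "\<psi> y = Hop \<iota> (f (w (s - \<tau>))) y + g y" for y
      have mh: "(\<lambda>y. Hop \<iota> (f (w (s - \<tau>))) y) \<in> borel_measurable borel"
      proof -
        have X: "(\<lambda>p. f (w (s - \<tau>)) (snd p)) \<in> borel_measurable ((lborel::real measure) \<Otimes>\<^sub>M (lborel::(real^'n) measure))"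
          by measurable
        have "(\<lambda>p. Hop \<iota> (f (w (s - \<tau>))) (snd p)) \<in> borel_measurable ((lborel::real measure) \<Otimes>\<^sub>M (lborel::(real^'n) measure))"
          using hop_meas[where \<Psi>="\<lambda>r. f (w (s - \<tau>))" and \<iota>=\<iota>, OF X] by simp
        from measurable_Pair2[OF this[unfolded split_beta'[symmetric]], of 0]
        show ?thesis by simp
      qed
      have [measurable]: "\<psi> \<in> borel_measurable borel" unfolding \<psi>_def using mh by measurable
      have "(\<integral>\<^sup>+y. ennreal ((\<psi> y)\<^sup>2) \<partial>lborel) \<le> (\<integral>\<^sup>+y. (ennreal \<bar>Hop \<iota> (f (w (s - \<tau>))) y\<bar> + ennreal \<bar>g y\<bar>)\<^sup>2 \<partial>lborel)"
      proof (rule nn_integral_mono)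
        fix y
        have "ennreal \<bar>\<psi> y\<bar> \<le> ennreal \<bar>Hop \<iota> (f (w (s - \<tau>))) y\<bar> + ennreal \<bar>g y\<bar>"
          unfolding \<psi>_def by (simp add: ennreal_plus[symmetric] del: ennreal_plus)
        then show "ennreal ((\<psi> y)\<^sup>2) \<le> (ennreal \<bar>Hop \<iota> (f (w (s - \<tau>))) y\<bar> + ennreal \<bar>g y\<bar>)\<^sup>2"
          unfolding sq_abs_ennreal by (intro power_mono) auto
      qed
      also have "\<dots> \<le> ennreal ((Nbar + L2norm g)\<^sup>2)"
      proof (rule tri2)
        have "(\<integral>\<^sup>+y. (ennreal \<bar>Hop \<iota> (f (w (s - \<tau>))) y\<bar>)\<^sup>2 \<partial>lborel) = (\<integral>\<^sup>+y. ennreal ((Hop \<iota> (f (w (s - \<tau>))) y)\<^sup>2) \<partial>lborel)"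
          unfolding sq_abs_ennreal ..
        also have "\<dots> \<le> (\<integral>\<^sup>+y. ennreal ((f (w (s - \<tau>)) y)\<^sup>2) \<partial>lborel)"
          by (rule Hop_bound) (use \<iota> in auto)
        also have "\<dots> = ennreal ((L2norm (f (w (s - \<tau>))))\<^sup>2)" by (rule nn_L2[OF Lf])
        also have "\<dots> \<le> ennreal (Nbar\<^sup>2)"
          using f_bdd[OF Lw] L2norm_nonneg[of "f (w (s - \<tau>))"] by (intro ennreal_leI power_mono) auto
        finally show "(\<integral>\<^sup>+y. (ennreal \<bar>Hop \<iota> (f (w (s - \<tau>))) y\<bar>)\<^sup>2 \<partial>lborel) \<le> ennreal (Nbar\<^sup>2)" .
        show "(\<integral>\<^sup>+y. (ennreal \<bar>g y\<bar>)\<^sup>2 \<partial>lborel) \<le> ennreal ((L2norm g)\<^sup>2)"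
          using nn_L2[OF Lg] by (simp add: sq_abs_ennreal)
      qed (use Nb mh L2norm_nonneg[of g] in auto)
      finally have psi: "(\<integral>\<^sup>+y. ennreal ((\<psi> y)\<^sup>2) \<partial>lborel) \<le> ennreal (M\<^sup>2)" unfolding M_def .
      have "(\<integral>\<^sup>+x. (F2 s x)\<^sup>2 \<partial>lborel) = (\<integral>\<^sup>+x. ennreal ((heat_sg \<mu> (t - s) \<psi> x)\<^sup>2) \<partial>lborel)"
        unfolding F2_def sq_abs_ennreal \<psi>_def ..
      also have "\<dots> \<le> ennreal ((exp (-\<mu>*(t-s)))\<^sup>2) * (\<integral>\<^sup>+y. ennreal ((\<psi> y)\<^sup>2) \<partial>lborel)"
        using s by (intro heat_bound) auto
      also have "\<dots> \<le> ennreal ((exp (-\<mu>*(t-s)))\<^sup>2) * ennreal (M\<^sup>2)"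
        by (intro mult_left_mono psi) auto
      also have "\<dots> = ennreal ((W2 s)\<^sup>2)"
        unfolding W2_def by (simp add: ennreal_mult[symmetric] power_mult_distrib)
      finally show "(\<integral>\<^sup>+x. (F2 s x)\<^sup>2 \<partial>lborel) \<le> ennreal ((W2 s)\<^sup>2)" .
    qed measurable
    have "(\<integral>\<^sup>+s. indicator {0..t} s * ennreal (W2 s) \<partial>lborel)
        = (\<integral>\<^sup>+s. ennreal (M * exp (-\<mu>*t)) * (indicator {0..t} s * ennreal (exp (\<mu> * s))) \<partial>lborel)"
    proof (rule nn_integral_cong)
      fix s :: real
      have "exp (-\<mu>*(t-s)) = exp (-\<mu>*t + \<mu> * s)" by (simp add: algebra_simps)
      also have "\<dots> = exp (-\<mu>*t) * exp (\<mu> * s)" by (rule exp_add)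
      finally have "W2 s = (M * exp (-\<mu>*t)) * exp (\<mu> * s)"
        unfolding W2_def by simp
      then show "indicator {0..t} s * ennreal (W2 s) = ennreal (M * exp (-\<mu>*t)) * (indicator {0..t} s * ennreal (exp (\<mu> * s)))"
        using M by (simp add: ennreal_mult mult_ac)
    qed
    also have "\<dots> = ennreal (M * exp (-\<mu>*t)) * (\<integral>\<^sup>+s. indicator {0..t} s * ennreal (exp (\<mu> * s)) \<partial>lborel)"
      by (rule nn_integral_cmult) measurable
    also have "\<dots> = ennreal (M * exp (-\<mu>*t)) * ennreal ((exp (\<mu> * t) - 1)/\<mu>)"
      using \<mu> t by (subst exp_int) auto
    also have "\<dots> = ennreal (M * (1 - exp (-\<mu>*t)) / \<mu>)"
      using M \<mu> t by (subst ennreal_mult[symmetric]) (auto simp: field_simps mult_exp_exp)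
    also have "\<dots> \<le> ennreal C"
      unfolding C_def using M \<mu> by (intro ennreal_leI divide_right_mono) (auto simp: mult_left_le)
    finally have "(\<integral>\<^sup>+s. indicator {0..t} s * ennreal (W2 s) \<partial>lborel) \<le> ennreal C" .
    then have "(\<integral>\<^sup>+s. indicator {0..t} s * ennreal (W2 s) \<partial>lborel)\<^sup>2 \<le> (ennreal C)\<^sup>2"
      by (intro power_mono) auto
    also have "\<dots> = ennreal (C\<^sup>2)" using C0 by (simp add: ennreal_power)
    finally show ?thesis using mink by simp
  qed
  have "(\<integral>\<^sup>+x. ennreal ((w t x)\<^sup>2) \<partial>lborel) \<le> (\<integral>\<^sup>+x. (a x + b x + c x)\<^sup>2 \<partial>lborel)"
    unfolding sq_abs_ennreal by (rule nn_integral_mono_AE) (rule pw)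
  also have "\<dots> \<le> ennreal ((A + B + C)\<^sup>2)"
  proof (rule tri2)
    show "(\<integral>\<^sup>+x. (a x + b x)\<^sup>2 \<partial>lborel) \<le> ennreal ((A + B)\<^sup>2)"
      by (rule tri2) (use Abd Bbd A0 B0 in auto)
  qed (use Cbd A0 B0 C0 in auto)
  finally have "L2norm (w t) \<le> A + B + C"
    using A0 B0 C0 t \<tau> by (intro L2norm_le_from_nn L2w) auto
  then show ?thesis unfolding A_def B_def C_def M_def by simp
qed



lemma fun_diff_eq: "(a - b) = (\<lambda>x. a x - b x)" for a b :: "'a \<Rightarrow> real"
  by (simp add: fun_diff_def)

lemma L2norm_abs_diff:
  fixes a b :: "real^'n \<Rightarrow> real"
  assumes "L2 a" "L2 b"
  shows "\<bar>L2norm a - L2norm b\<bar> \<le> L2norm (a - b)"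
  using L2norm_tri[OF assms L2_diff[OF assms]] L2norm_tri[OF assms(2,1) L2_diff[OF assms(2,1)]]
    L2norm_commute[of a b] unfolding fun_diff_eq by linarith

lemma init_bound:
  fixes \<phi> :: "real \<Rightarrow> real^'n \<Rightarrow> real"
  assumes \<tau>: "\<tau> > 0" and \<phi>: "\<phi> \<in> Cspace \<tau>" and \<theta>: "\<theta> \<in> {-\<tau>..0}"
  shows "L2norm (\<phi> \<theta>) \<le> Cnorm \<tau> \<phi>"
proof -
  have L: "\<And>\<theta>. \<theta> \<in> {-\<tau>..0} \<Longrightarrow> L2 (\<phi> \<theta>)" and C: "L2_continuous_on {-\<tau>..0} \<phi>"
    using \<phi> by (auto simp: Cspace_def)
  have "continuous_on {-\<tau>..0} (\<lambda>\<theta>. L2norm (\<phi> \<theta>))"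
    unfolding continuous_on_iff
  proof (intro ballI allI impI)
    fix x e :: real assume x: "x \<in> {-\<tau>..0}" and e: "e > 0"
    from C x e obtain d where d: "d > 0" "\<And>s. s \<in> {-\<tau>..0} \<Longrightarrow> \<bar>s - x\<bar> < d \<Longrightarrow> L2norm (\<phi> s - \<phi> x) < e"
      unfolding L2_continuous_on_def by blast
    show "\<exists>d>0. \<forall>x'\<in>{-\<tau>..0}. dist x' x < d \<longrightarrow> dist (L2norm (\<phi> x')) (L2norm (\<phi> x)) < e"
    proof (intro exI[of _ d] conjI ballI impI)
      fix x' assume x': "x' \<in> {-\<tau>..0}" and "dist x' x < d"
      then have "L2norm (\<phi> x' - \<phi> x) < e" using d by (simp add: dist_real_def)
      moreover have "\<bar>L2norm (\<phi> x') - L2norm (\<phi> x)\<bar> \<le> L2norm (\<phi> x' - \<phi> x)"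
        using L x x' by (intro L2norm_abs_diff) auto
      ultimately show "dist (L2norm (\<phi> x')) (L2norm (\<phi> x)) < e" by (simp add: dist_real_def)
    qed (rule d(1))
  qed
  then have "compact ((\<lambda>\<theta>. L2norm (\<phi> \<theta>)) ` {-\<tau>..0})"
    by (intro compact_continuous_image) auto
  then have "bdd_above ((\<lambda>\<theta>. L2norm (\<phi> \<theta>)) ` {-\<tau>..0})"
    by (intro bounded_imp_bdd_above compact_imp_bounded)
  then show ?thesis unfolding Cnorm_def using \<theta> by (rule cSUP_upper2) simp
qed

lemma L2norm_AE_eq:
  fixes a b :: "real^'n \<Rightarrow> real"
  assumes "L2 a" "L2 b" "AE x in lborel. a x = b x"
  shows "L2norm a = L2norm b"
proof -
  have [measurable]: "a \<in> borel_measurable borel" "b \<in> borel_measurable borel"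
    using assms by (auto simp: L2_def)
  have "(\<integral>x. (a x)\<^sup>2 \<partial>lborel) = (\<integral>x. (b x)\<^sup>2 \<partial>lborel)"
    by (rule integral_cong_AE) (use assms(3) in auto)
  then show ?thesis by (simp add: L2norm_def)
qed



lemma exp_shift_id:
  fixes \<mu> t s lam \<tau> :: real
  shows "exp (-\<mu>*(t-s)) * exp (-lam*(s-\<tau>)) = exp (lam*\<tau>) * exp (-\<mu>*t) * exp ((\<mu>-lam) * s)"
proof -
  have "exp (-\<mu>*(t-s)) * exp (-lam*(s-\<tau>)) = exp (-\<mu>*(t-s) + -lam*(s-\<tau>))" by (rule mult_exp_exp)
  also have "-\<mu>*(t-s) + -lam*(s-\<tau>) = lam*\<tau> + -\<mu>*t + (\<mu>-lam) * s" by (simp add: algebra_simps)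
  also have "exp \<dots> = exp (lam*\<tau>) * exp (-\<mu>*t) * exp ((\<mu>-lam) * s)" by (simp only: exp_add)
  finally show ?thesis .
qed

lemma exp_shift_id2:
  fixes \<mu> t s :: real
  shows "exp (-\<mu>*(t-s)) = exp (-\<mu>*t) * exp (\<mu> * s)"
proof -
  have "exp (-\<mu>*(t-s)) = exp (-\<mu>*t + \<mu> * s)" by (simp add: algebra_simps)
  also have "\<dots> = exp (-\<mu>*t) * exp (\<mu> * s)" by (rule exp_add)
  finally show ?thesis .
qed

lemma J_integral:
  assumes t: "t > 0" and \<mu>: "\<mu> > 0" and lam: "lam < \<mu>" and A: "A \<ge> 0" and Le: "Le \<ge> 0"
    and vb: "\<And>s. s \<in> {0..t} \<Longrightarrow> V s \<le> A * exp (-lam*(s-\<tau>)) + Le"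
  shows "(\<integral>\<^sup>+s. indicator {0..t} s * ennreal (exp (-\<mu>*(t-s)) * V s) \<partial>lborel)
      \<le> ennreal (A * exp (lam*\<tau>) * exp (-\<mu>*t) * ((exp ((\<mu>-lam) * t) - 1)/(\<mu>-lam))
                 + Le * exp (-\<mu>*t) * ((exp (\<mu> * t) - 1)/\<mu>))"
proof -
  have "(\<integral>\<^sup>+s. indicator {0..t} s * ennreal (exp (-\<mu>*(t-s)) * V s) \<partial>lborel)
      \<le> (\<integral>\<^sup>+s. ennreal (A * exp (lam*\<tau>) * exp (-\<mu>*t)) * (indicator {0..t} s * ennreal (exp ((\<mu>-lam) * s)))
              + ennreal (Le * exp (-\<mu>*t)) * (indicator {0..t} s * ennreal (exp (\<mu> * s))) \<partial>lborel)"
  proof (rule nn_integral_mono)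
    fix s
    show "indicator {0..t} s * ennreal (exp (-\<mu>*(t-s)) * V s)
      \<le> ennreal (A * exp (lam*\<tau>) * exp (-\<mu>*t)) * (indicator {0..t} s * ennreal (exp ((\<mu>-lam) * s)))
              + ennreal (Le * exp (-\<mu>*t)) * (indicator {0..t} s * ennreal (exp (\<mu> * s)))"
    proof (cases "s \<in> {0..t}")
      case True
      have "exp (-\<mu>*(t-s)) * V s \<le> exp (-\<mu>*(t-s)) * (A * exp (-lam*(s-\<tau>)) + Le)"
        by (intro mult_left_mono vb True) auto
      also have "\<dots> = A * (exp (-\<mu>*(t-s)) * exp (-lam*(s-\<tau>))) + Le * exp (-\<mu>*(t-s))"
        by (simp add: algebra_simps)
      also have "\<dots> = (A * exp (lam*\<tau>) * exp (-\<mu>*t)) * exp ((\<mu>-lam) * s) + (Le * exp (-\<mu>*t)) * exp (\<mu> * s)"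
        unfolding exp_shift_id unfolding exp_shift_id2 by (simp add: mult_ac)
      finally have le: "exp (-\<mu>*(t-s)) * V s \<le> \<dots>" .
      have "ennreal (exp (-\<mu>*(t-s)) * V s) \<le> ennreal ((A * exp (lam*\<tau>) * exp (-\<mu>*t)) * exp ((\<mu>-lam) * s) + (Le * exp (-\<mu>*t)) * exp (\<mu> * s))"
        by (rule ennreal_leI[OF le])
      also have "\<dots> = ennreal (A * exp (lam*\<tau>) * exp (-\<mu>*t)) * ennreal (exp ((\<mu>-lam) * s)) + ennreal (Le * exp (-\<mu>*t)) * ennreal (exp (\<mu> * s))"
        using A Le by (simp add: ennreal_plus[symmetric] ennreal_mult[symmetric] del: ennreal_plus)
      finally show ?thesis using True by simp
    qed simp
  qed
  also have "\<dots> = ennreal (A * exp (lam*\<tau>) * exp (-\<mu>*t)) * (\<integral>\<^sup>+s. indicator {0..t} s * ennreal (exp ((\<mu>-lam) * s)) \<partial>lborel)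
        + ennreal (Le * exp (-\<mu>*t)) * (\<integral>\<^sup>+s. indicator {0..t} s * ennreal (exp (\<mu> * s)) \<partial>lborel)"
    by (simp add: nn_integral_add nn_integral_cmult)
  also have "\<dots> = ennreal (A * exp (lam*\<tau>) * exp (-\<mu>*t)) * ennreal ((exp ((\<mu>-lam) * t) - 1)/(\<mu>-lam))
        + ennreal (Le * exp (-\<mu>*t)) * ennreal ((exp (\<mu> * t) - 1)/\<mu>)"
    using t \<mu> lam by (simp add: exp_int)
  also have "\<dots> = ennreal (A * exp (lam*\<tau>) * exp (-\<mu>*t) * ((exp ((\<mu>-lam) * t) - 1)/(\<mu>-lam))
                 + Le * exp (-\<mu>*t) * ((exp (\<mu> * t) - 1)/\<mu>))"
  proof -
    have p1: "(exp ((\<mu>-lam) * t) - 1)/(\<mu>-lam) \<ge> 0" using t lam by (auto intro!: divide_nonneg_pos)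
    have p2: "(exp (\<mu> * t) - 1)/\<mu> \<ge> 0" using t \<mu> by (auto intro!: divide_nonneg_pos)
    have x1: "A * exp (lam*\<tau>) * exp (-\<mu>*t) \<ge> 0" and x2: "Le * exp (-\<mu>*t) \<ge> 0" using A Le by auto
    show ?thesis
      unfolding ennreal_mult[OF x1 p1, symmetric] ennreal_mult[OF x2 p2, symmetric]
      by (rule ennreal_plus[symmetric]) (use mult_nonneg_nonneg[OF x1 p1] mult_nonneg_nonneg[OF x2 p2] in simp_all)
  qed
  finally show ?thesis .
qed



lemma decay:
  fixes w :: "real \<Rightarrow> real^'n \<Rightarrow> real" and \<phi>0 g :: "real^'n \<Rightarrow> real"
    and f :: "(real^'n \<Rightarrow> real) \<Rightarrow> (real^'n \<Rightarrow> real)"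
  assumes \<tau>: "\<tau> > 0" and \<mu>: "\<mu> > 0" and \<sigma>: "\<sigma> > 0" and \<iota>: "\<iota> > 0"
    and Lg: "L2 g" and Nb: "Nbar > 0"
    and f_L2: "\<And>\<psi>. L2 \<psi> \<Longrightarrow> L2 (f \<psi>)"
    and f_bdd: "\<And>\<psi>. L2 \<psi> \<Longrightarrow> L2norm (f \<psi>) \<le> Nbar"
    and L2w: "\<And>r. r \<ge> -\<tau> \<Longrightarrow> L2 (w r)"
    and measw: "(\<lambda>(s, x). w s x) \<in> borel_measurable (lborel \<Otimes>\<^sub>M lborel)"
    and measf: "(\<lambda>(s, x). f (w s) x) \<in> borel_measurable (lborel \<Otimes>\<^sub>M lborel)"
    and L\<phi>: "L2 \<phi>0"
    and eq: "\<And>t. t > 0 \<Longrightarrow> AE x in lborel.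
        w t x = heat_sg \<mu> t \<phi>0 x
          + \<sigma> * (LINT s:{0..t}|lborel. heat_sg \<mu> (t - s) (w (s - \<tau>)) x)
          + (LINT s:{0..t}|lborel. heat_sg \<mu> (t - s) (\<lambda>y. Hop \<iota> (f (w (s - \<tau>))) y + g y) x)"
    and cond: "\<sigma> * exp (\<mu> * \<tau>) - \<mu> < 0"
    and R: "R \<ge> 0" and init: "\<And>\<theta>. \<theta> \<in> {-\<tau>..0} \<Longrightarrow> L2norm (w \<theta>) \<le> R"
    and \<phi>0b: "L2norm \<phi>0 \<le> R"
    and r: "r \<ge> -\<tau>"
  shows "L2norm (w r) \<le> R / (1 - exp (-(\<sigma>*exp(\<mu>*\<tau>))*\<tau>)) * exp (-(\<mu> - \<sigma>*exp(\<mu>*\<tau>))*r)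
                        + 3*(Nbar + L2norm g)/(2*(\<mu> - \<sigma>*exp(\<mu>*\<tau>)))"
proof -
  define \<kappa> where "\<kappa> = \<sigma>*exp(\<mu>*\<tau>)"
  define lam where "lam = \<mu> - \<kappa>"
  define q where "q = exp (-\<kappa>*\<tau>)"
  define A where "A = R / (1 - q)"
  define M where "M = Nbar + L2norm g"
  define L where "L = 3*M/(2*(\<mu> - \<kappa>))"
  define \<epsilon> where "\<epsilon> = M / (2*\<sigma>)"
  have \<kappa>0: "\<kappa> > 0" using \<sigma> by (simp add: \<kappa>_def)
  have \<kappa>\<mu>: "\<kappa> < \<mu>" using cond by (simp add: \<kappa>_def)
  have \<sigma>\<kappa>: "\<sigma> \<le> \<kappa>" unfolding \<kappa>_def using \<sigma> \<mu> \<tau> by simp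
  have lam0: "lam > 0" and lam\<mu>: "lam < \<mu>" using \<kappa>0 \<kappa>\<mu> by (auto simp: lam_def)
  have q0: "q > 0" and q1: "q < 1" using \<kappa>0 \<tau> by (auto simp: q_def)
  have A0: "A \<ge> 0" using R q1 by (simp add: A_def)
  have AR: "R + q * A = A" using q1 by (simp add: A_def field_simps)
  have M0: "M > 0" using Nb L2norm_nonneg[of g] by (simp add: M_def)
  have L0: "L \<ge> 0" using M0 \<kappa>\<mu> by (simp add: L_def)
  have \<epsilon>0: "\<epsilon> > 0" using M0 \<sigma> by (simp add: \<epsilon>_def)
  have Lfix: "(\<sigma> * (L + \<epsilon>) + M) / \<mu> \<le> L"
  proof -
    have "\<sigma> * \<epsilon> = M/2" using \<sigma> by (simp add: \<epsilon>_def)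
    moreover have "(\<mu> - \<kappa>) * L = 3*M/2" using \<kappa>\<mu> by (simp add: L_def field_simps)
    moreover have "\<sigma> * L \<le> \<kappa> * L" using \<sigma>\<kappa> L0 by (intro mult_right_mono)
    ultimately have "\<sigma> * (L + \<epsilon>) + M \<le> \<mu> * L" by (simp add: algebra_simps)
    then show ?thesis using \<mu> by (simp add: divide_le_eq mult.commute)
  qed
  define P where "P r = A * exp (-lam*r) + L" for r
  have base: "L2norm (w r) \<le> P r" if "r \<in> {-\<tau>..0}" for r
  proof -
    have "L2norm (w r) \<le> R" using init that by blast
    also have "R \<le> A" using AR q0 A0 by (smt (verit) mult_nonneg_nonneg)
    also have "A \<le> A * exp (-lam*r)" using that lam0 A0 by (intro mult_le_cancel_left1[THEN iffD2]) (auto simp: mult_nonneg_nonpos)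
    finally show ?thesis using L0 by (simp add: P_def)
  qed
  have ind: "\<forall>r\<in>{-\<tau>..real k * \<tau>}. L2norm (w r) \<le> P r" for k :: nat
  proof (induction k)
    case 0
    then show ?case using base by simp
  next
    case (Suc k)
    show ?case
    proof
      fix t assume t: "t \<in> {-\<tau>..real (Suc k) * \<tau>}"
      show "L2norm (w t) \<le> P t"
      proof (cases "t \<le> real k * \<tau>")
        case True
        then show ?thesis using Suc t by auto
      next
        case False
        then have tpos: "t > 0" using \<tau> by (smt (verit) of_nat_0_le_iff mult_nonneg_nonneg)
        define Jx where "Jx = A * exp (lam*\<tau>) * exp (-\<mu>*t) * ((exp ((\<mu>-lam) * t) - 1)/(\<mu>-lam))
                 + (L + \<epsilon>) * exp (-\<mu>*t) * ((exp (\<mu> * t) - 1)/\<mu>)"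
        have vb: "L2norm (w (s - \<tau>)) + \<epsilon> \<le> A * exp (-lam*(s-\<tau>)) + (L + \<epsilon>)" if s: "s \<in> {0..t}" for s
        proof -
          have "s - \<tau> \<in> {-\<tau>..real k * \<tau>}" using s t by (auto simp: algebra_simps)
          then show ?thesis using Suc by (auto simp: P_def)
        qed
        have Jint: "(\<integral>\<^sup>+s. indicator {0..t} s * ennreal (exp (-\<mu>*(t-s)) * (L2norm (w (s-\<tau>)) + \<epsilon>)) \<partial>lborel) \<le> ennreal Jx"
          unfolding Jx_def
          by (rule J_integral[where V="\<lambda>s. L2norm (w (s-\<tau>)) + \<epsilon>"]) (use tpos \<mu> lam\<mu> A0 L0 \<epsilon>0 vb in auto)
        have Jx0: "Jx \<ge> 0" unfolding Jx_def using tpos \<mu> lam\<mu> A0 L0 \<epsilon>0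
          by (intro add_nonneg_nonneg mult_nonneg_nonneg divide_nonneg_pos) auto
        have st: "L2norm (w t) \<le> exp (-\<mu>*t) * L2norm \<phi>0 + \<sigma>*Jx + (Nbar + L2norm g)/\<mu>"
          by (rule step_ineq[OF \<tau> \<mu> \<sigma> \<iota> Lg Nb f_L2 f_bdd L2w measw measf L\<phi> tpos eq[OF tpos] \<epsilon>0 Jint Jx0])
        define E where "E = exp (-lam*t)"
        have E1: "exp (-\<mu>*t) \<le> E" unfolding E_def using lam\<mu> tpos by simp
        have E2: "exp (-\<mu>*t) * exp (\<kappa> * t) = E"
          unfolding E_def lam_def by (simp add: mult_exp_exp algebra_simps)
        have p1: "exp (-\<mu>*t) * L2norm \<phi>0 \<le> E * R"
          using E1 \<phi>0b L2norm_nonneg[of \<phi>0] by (intro mult_mono) (auto simp: E_def)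
        have sq: "\<sigma> * exp (lam*\<tau>) = \<kappa> * q"
          unfolding \<kappa>_def q_def lam_def by (simp add: mult.assoc mult_exp_exp algebra_simps)
        have p2: "\<sigma> * (A * exp (lam*\<tau>) * exp (-\<mu>*t) * ((exp ((\<mu>-lam) * t) - 1)/(\<mu>-lam))) \<le> q * A * E"
        proof -
          have ml: "\<mu> - lam = \<kappa>" by (simp add: lam_def)
          have "exp (-\<mu>*t) * (exp (\<kappa> * t) - 1) \<le> E" using E2 by (simp add: algebra_simps)
          then have "A * q * (exp (-\<mu>*t) * (exp (\<kappa> * t) - 1)) \<le> A * q * E"
            using A0 q0 by (intro mult_left_mono) auto
          moreover have "\<sigma> * (A * exp (lam*\<tau>) * exp (-\<mu>*t) * ((exp ((\<mu>-lam) * t) - 1)/(\<mu>-lam)))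
              = A * q * (exp (-\<mu>*t) * (exp (\<kappa> * t) - 1))"
          proof -
            have "\<sigma> * (A * exp (lam*\<tau>) * exp (-\<mu>*t) * ((exp ((\<mu>-lam) * t) - 1)/(\<mu>-lam)))
               = (\<sigma> * exp (lam*\<tau>)) * A * (exp (-\<mu>*t) * (exp (\<kappa> * t) - 1)) / \<kappa>"
              unfolding ml by (simp add: mult_ac)
            also have "\<dots> = \<kappa> * (q * A * (exp (-\<mu>*t) * (exp (\<kappa> * t) - 1))) / \<kappa>"
              unfolding sq by (simp add: mult_ac)
            also have "\<dots> = A * q * (exp (-\<mu>*t) * (exp (\<kappa> * t) - 1))"
              using \<kappa>0 by (simp add: mult_ac)
            finally show ?thesis .
          qed
          ultimately show ?thesis by (simp add: mult_ac)
        qed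
        have p3: "\<sigma> * ((L + \<epsilon>) * exp (-\<mu>*t) * ((exp (\<mu> * t) - 1)/\<mu>)) \<le> \<sigma> * (L + \<epsilon>) / \<mu>"
        proof -
          have "exp (-\<mu>*t) * (exp (\<mu> * t) - 1) \<le> 1"
            by (simp add: algebra_simps mult_exp_exp)
          then have "\<sigma> * (L + \<epsilon>) * (exp (-\<mu>*t) * (exp (\<mu> * t) - 1)) \<le> \<sigma> * (L + \<epsilon>)"
            using \<sigma> L0 \<epsilon>0 by (intro mult_left_le) auto
          then have "\<sigma> * (L + \<epsilon>) * (exp (-\<mu>*t) * (exp (\<mu> * t) - 1)) / \<mu> \<le> \<sigma> * (L + \<epsilon>) / \<mu>"
            using \<mu> by (intro divide_right_mono) auto
          moreover have "\<sigma> * ((L + \<epsilon>) * exp (-\<mu>*t) * ((exp (\<mu> * t) - 1)/\<mu>))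
             = \<sigma> * (L + \<epsilon>) * (exp (-\<mu>*t) * (exp (\<mu> * t) - 1)) / \<mu>"
            by (simp add: mult_ac)
          ultimately show ?thesis by simp
        qed
        have "L2norm (w t) \<le> E * R + q * A * E + \<sigma> * (L + \<epsilon>) / \<mu> + M / \<mu>"
          using st p1 p2 p3 unfolding Jx_def M_def by (simp add: distrib_left)
        also have "\<dots> = (R + q * A) * E + (\<sigma> * (L + \<epsilon>) + M) / \<mu>"
          by (simp add: algebra_simps add_divide_distrib)
        also have "\<dots> \<le> A * E + L" unfolding AR using Lfix by simp
        finally show ?thesis by (simp add: P_def E_def)
      qed
    qed
  qed
  obtain k :: nat where "r \<le> real k * \<tau>"
  proof -
    obtain k :: nat where "r / \<tau> \<le> real k" using real_arch_simple by blast
    then have "r \<le> real k * \<tau>" using \<tau> by (simp add: divide_le_eq)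
    then show ?thesis by (rule that)
  qed
  then have "L2norm (w r) \<le> P r" using ind[of k] r by auto
  then show ?thesis
    by (simp add: P_def A_def q_def lam_def L_def M_def \<kappa>_def)
qed



theorem theorem2p1:
  fixes \<tau> \<mu> \<sigma> \<iota> Nbar :: real
    and g :: "real^'n \<Rightarrow> real"
    and f :: "(real^'n \<Rightarrow> real) \<Rightarrow> (real^'n \<Rightarrow> real)"
    and u :: "(real \<Rightarrow> real^'n \<Rightarrow> real) \<Rightarrow> real \<Rightarrow> real^'n \<Rightarrow> real"
  assumes "\<tau> > 0" and "\<mu> > 0" and "\<sigma> > 0" and "\<iota> > 0"
    and "L2 g"
    and "Nbar > 0"
    and f_L2: "\<And>\<psi>. L2 \<psi> \<Longrightarrow> L2 (f \<psi>)"
    and f_bdd: "\<And>\<psi>. L2 \<psi> \<Longrightarrow> L2norm (f \<psi>) \<le> Nbar"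
    and f_welldef: "\<And>\<psi>1 \<psi>2. L2 \<psi>1 \<Longrightarrow> L2 \<psi>2 \<Longrightarrow> (AE x in lborel. \<psi>1 x = \<psi>2 x)
                      \<Longrightarrow> (AE x in lborel. f \<psi>1 x = f \<psi>2 x)"
    and sol: "\<And>\<phi>. \<phi> \<in> Cspace \<tau> \<Longrightarrow> mild_solution \<tau> \<mu> \<sigma> \<iota> f g \<phi> (u \<phi>)"
    and cond: "\<sigma> * exp (\<mu> * \<tau>) - \<mu> < 0"
  shows "\<forall>D. D \<subseteq> Cspace \<tau> \<and> (\<exists>R. \<forall>\<phi>\<in>D. Cnorm \<tau> \<phi> \<le> R) \<longrightarrow>
           (\<exists>T>0. \<forall>t\<ge>T. \<forall>\<phi>\<in>D.
              (\<lambda>\<theta>. u \<phi> (t + \<theta>)) \<in>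
                {\<psi> \<in> Cspace \<tau>. Cnorm \<tau> \<psi> \<le>
                   2 * ((Nbar + L2norm g) / \<mu>
                        + (Nbar + L2norm g) * \<sigma> * exp (\<mu> * \<tau>) / (\<mu> * (\<mu> - \<sigma> * exp (\<mu> * \<tau>))))})"
proof (intro allI impI)
  note \<tau> = assms(1) and \<mu> = assms(2) and \<sigma> = assms(3) and \<iota> = assms(4) and Lg = assms(5) and Nb = assms(6)
  fix D :: "(real \<Rightarrow> real^'n \<Rightarrow> real) set" assume "D \<subseteq> Cspace \<tau> \<and> (\<exists>R. \<forall>\<phi>\<in>D. Cnorm \<tau> \<phi> \<le> R)"
  then obtain R0 where DC: "D \<subseteq> Cspace \<tau>" and R0: "\<And>\<phi>. \<phi> \<in> D \<Longrightarrow> Cnorm \<tau> \<phi> \<le> R0" by blast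
  define R where "R = max R0 0"
  define \<kappa> where "\<kappa> = \<sigma>*exp(\<mu>*\<tau>)"
  define lam where "lam = \<mu> - \<kappa>"
  define q where "q = exp (-\<kappa>*\<tau>)"
  define A where "A = R / (1 - q)"
  define M where "M = Nbar + L2norm g"
  define L where "L = 3*M/(2*(\<mu> - \<kappa>))"
  define Z where "Z = 2*A*(\<mu>-\<kappa>)/M + 1"
  define T where "T = \<tau> + Z/lam"
  have R: "R \<ge> 0" "R0 \<le> R" by (auto simp: R_def)
  have \<kappa>0: "\<kappa> > 0" using \<sigma> by (simp add: \<kappa>_def)
  have \<kappa>\<mu>: "\<kappa> < \<mu>" using cond by (simp add: \<kappa>_def)
  have lam0: "lam > 0" using \<kappa>\<mu> by (simp add: lam_def)
  have q1: "q < 1" using \<kappa>0 \<tau> by (simp add: q_def)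
  have A0: "A \<ge> 0" using R q1 by (simp add: A_def)
  have M0: "M > 0" using Nb L2norm_nonneg[of g] by (simp add: M_def)
  have Z1: "Z \<ge> 1" using A0 M0 \<kappa>\<mu> by (simp add: Z_def)
  have T0: "T > \<tau>" using Z1 lam0 by (simp add: T_def)
  have target: "2 * ((Nbar + L2norm g) / \<mu> + (Nbar + L2norm g) * \<sigma> * exp (\<mu> * \<tau>) / (\<mu> * (\<mu> - \<sigma> * exp (\<mu> * \<tau>))))
      = 2*M/(\<mu>-\<kappa>)"
  proof -
    have ne: "\<mu> - \<sigma> * exp (\<mu> * \<tau>) \<noteq> 0" using cond by simp
    show ?thesis unfolding M_def \<kappa>_def using \<mu> ne by (simp add: field_simps)
  qed
  have AZ: "A * exp (-Z) \<le> M/(2*(\<mu>-\<kappa>))"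
  proof -
    have "1 + Z \<le> exp Z" by (rule exp_ge_add_one_self)
    then have "exp (-Z) \<le> 1/(1+Z)" using Z1 by (simp add: exp_minus field_simps)
    then have "A * exp (-Z) \<le> A / (1+Z)" using A0 by (simp add: mult_left_mono divide_inverse)
    also have "A / (1+Z) \<le> M/(2*(\<mu>-\<kappa>))"
      using Z1 M0 \<kappa>\<mu> A0 by (simp add: Z_def field_simps)
    finally show ?thesis .
  qed
  show "\<exists>T>0. \<forall>t\<ge>T. \<forall>\<phi>\<in>D.
              (\<lambda>\<theta>. u \<phi> (t + \<theta>)) \<in>
                {\<psi> \<in> Cspace \<tau>. Cnorm \<tau> \<psi> \<le>
                   2 * ((Nbar + L2norm g) / \<mu>
                        + (Nbar + L2norm g) * \<sigma> * exp (\<mu> * \<tau>) / (\<mu> * (\<mu> - \<sigma> * exp (\<mu> * \<tau>))))}"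
  proof (intro exI[of _ T] conjI allI impI ballI)
    show "T > 0" using T0 \<tau> by simp
    fix t \<phi> assume tT: "T \<le> t" and \<phi>D: "\<phi> \<in> D"
    have \<phi>C: "\<phi> \<in> Cspace \<tau>" using DC \<phi>D by auto
    have ms: "mild_solution \<tau> \<mu> \<sigma> \<iota> f g \<phi> (u \<phi>)" by (rule sol[OF \<phi>C])
    have L2w: "\<And>r. r \<ge> -\<tau> \<Longrightarrow> L2 (u \<phi> r)" and Cw: "L2_continuous_on {-\<tau>..} (u \<phi>)"
      and measw: "(\<lambda>(s, x). u \<phi> s x) \<in> borel_measurable (lborel \<Otimes>\<^sub>M lborel)"
      and measf: "(\<lambda>(s, x). f (u \<phi> s) x) \<in> borel_measurable (lborel \<Otimes>\<^sub>M lborel)"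
      and ini: "\<And>\<theta>. \<theta> \<in> {-\<tau>..0} \<Longrightarrow> AE x in lborel. u \<phi> \<theta> x = \<phi> \<theta> x"
      and eq: "\<And>t. t > 0 \<Longrightarrow> AE x in lborel.
        u \<phi> t x = heat_sg \<mu> t (\<phi> 0) x
          + \<sigma> * (LINT s:{0..t}|lborel. heat_sg \<mu> (t - s) (u \<phi> (s - \<tau>)) x)
          + (LINT s:{0..t}|lborel. heat_sg \<mu> (t - s) (\<lambda>y. Hop \<iota> (f (u \<phi> (s - \<tau>))) y + g y) x)"
      using ms unfolding mild_solution_def by auto
    have L\<phi>: "\<And>\<theta>. \<theta> \<in> {-\<tau>..0} \<Longrightarrow> L2 (\<phi> \<theta>)" using \<phi>C by (auto simp: Cspace_def)
    have phib: "L2norm (\<phi> \<theta>) \<le> R" if "\<theta> \<in> {-\<tau>..0}" for \<theta>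
      using init_bound[OF \<tau> \<phi>C that] R0[OF \<phi>D] R by linarith
    have init: "L2norm (u \<phi> \<theta>) \<le> R" if "\<theta> \<in> {-\<tau>..0}" for \<theta>
    proof -
      have "L2norm (u \<phi> \<theta>) = L2norm (\<phi> \<theta>)"
        using that by (intro L2norm_AE_eq L2w L\<phi> ini) auto
      then show ?thesis using phib[OF that] by simp
    qed
    have dec: "L2norm (u \<phi> r) \<le> A * exp (-lam*r) + L" if "r \<ge> -\<tau>" for r
      using decay[OF \<tau> \<mu> \<sigma> \<iota> Lg Nb f_L2 f_bdd L2w measw measf L\<phi>[of 0] eq cond R(1) init phib[of 0] that] \<tau>
      by (simp add: A_def q_def lam_def L_def M_def \<kappa>_def)
    have bnd: "L2norm (u \<phi> (t + \<theta>)) \<le> 2*M/(\<mu>-\<kappa>)" if \<theta>: "\<theta> \<in> {-\<tau>..0}" for \<theta>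
    proof -
      have r: "t + \<theta> \<ge> Z/lam" using tT \<theta> by (auto simp: T_def)
      then have "lam * (t + \<theta>) \<ge> Z" using lam0 by (simp add: field_simps)
      then have "exp (-lam*(t+\<theta>)) \<le> exp (-Z)" by simp
      then have "A * exp (-lam*(t+\<theta>)) \<le> A * exp (-Z)" using A0 by (rule mult_left_mono)
      moreover have "L2norm (u \<phi> (t + \<theta>)) \<le> A * exp (-lam*(t+\<theta>)) + L"
        using r Z1 lam0 \<tau> by (intro dec) (smt (verit) divide_nonneg_pos)
      moreover have "M/(2*(\<mu>-\<kappa>)) + L = 2*M/(\<mu>-\<kappa>)"
      proof -
        have "M/(2*(\<mu>-\<kappa>)) + L = (M + 3*M)/(2*(\<mu>-\<kappa>))"
          unfolding L_def by (simp add: add_divide_distrib)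
        also have "\<dots> = 2*M/(\<mu>-\<kappa>)" using \<kappa>\<mu> by (simp add: field_simps)
        finally show ?thesis .
      qed
      ultimately show ?thesis using AZ by linarith
    qed
    have inC: "(\<lambda>\<theta>. u \<phi> (t + \<theta>)) \<in> Cspace \<tau>"
      unfolding Cspace_def
    proof (intro CollectI conjI ballI)
      fix \<theta> assume "\<theta> \<in> {-\<tau>..0}"
      then show "L2 (u \<phi> (t + \<theta>))" using tT T0 by (intro L2w) auto
    next
      show "L2_continuous_on {-\<tau>..0} (\<lambda>\<theta>. u \<phi> (t + \<theta>))"
        unfolding L2_continuous_on_def
      proof (intro ballI allI impI)
        fix \<theta>0 e :: real assume \<theta>0: "\<theta>0 \<in> {-\<tau>..0}" and e: "e > 0"
        have "t + \<theta>0 \<in> {-\<tau>..}" using \<theta>0 tT T0 by auto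
        with Cw e obtain d where d: "d > 0" "\<And>s. s \<in> {-\<tau>..} \<Longrightarrow> \<bar>s - (t + \<theta>0)\<bar> < d \<Longrightarrow> L2norm (u \<phi> s - u \<phi> (t + \<theta>0)) < e"
          unfolding L2_continuous_on_def by blast
        show "\<exists>d>0. \<forall>s\<in>{-\<tau>..0}. \<bar>s - \<theta>0\<bar> < d \<longrightarrow> L2norm (u \<phi> (t + s) - u \<phi> (t + \<theta>0)) < e"
        proof (intro exI[of _ d] conjI ballI impI)
          fix s assume s: "s \<in> {-\<tau>..0}" "\<bar>s - \<theta>0\<bar> < d"
          show "L2norm (u \<phi> (t + s) - u \<phi> (t + \<theta>0)) < e"
            using s tT T0 by (intro d(2)) auto
        qed (rule d(1))
      qed
    qed
    have "Cnorm \<tau> (\<lambda>\<theta>. u \<phi> (t + \<theta>)) \<le> 2*M/(\<mu>-\<kappa>)"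
      unfolding Cnorm_def using \<tau> bnd by (intro cSUP_least) auto
    then show "(\<lambda>\<theta>. u \<phi> (t + \<theta>)) \<in>
                {\<psi> \<in> Cspace \<tau>. Cnorm \<tau> \<psi> \<le>
                   2 * ((Nbar + L2norm g) / \<mu>
                        + (Nbar + L2norm g) * \<sigma> * exp (\<mu> * \<tau>) / (\<mu> * (\<mu> - \<sigma> * exp (\<mu> * \<tau>))))}"
      using inC unfolding target by simp
  qed
qed


end
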